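(* Let $H_0$ be a static simple graph with $n$ nodes and $m\ge n$ edges, and set $r=2^6(n+1)^2$ and $\alpha=\max(2^{20}m^2, r^2)$. Construct a temporal graph $G$ as follows. Its node set is $U\cup V\cup X\cup Y$ (disjoint), where $U=\{u_1,\dots,u_n\}$ and $V=\{v_1,\dots,v_n\}$ are two copies of the nodes of $H_0$, and $|X|=|Y|=r$. For every edge of $H_0$ between its $i$-th and $j$-th node, $G$ contains an edge $(u_i,u_j,1)$ and an edge $(v_i,v_j,1)$. For every $i$, $G$ contains $n\alpha$ parallel edges $(u_i,v_i,0)$. For every $x\in X$, $y\in Y$, $G$ contains $\alpha$ parallel edges $(x,y,0)$. Take $K=H=1$, $R=2$, and the single segment $T_1=[0,1]$. Let $\mathcal{P}=(P_1,P_2)$ be a partition of the nodes of $G$ that, together with some parameters $\Lambda$, maximizes $\mathcal{L}(\mathcal{P},\mathcal{T},g,\Lambda)$. Then either $X\subseteq P_1$ and $Y\subseteq P_2$, or $X\subseteq P_2$ and $Y\subseteq P_1$. Moreover, for every $i$, $u_i\in P_1$ implies $v_i\in P_2$, and $v_i\in P_1$ implies $u_i\in P_2$.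
   Context: A temporal graph $G=(V,E)$ consists of a finite node set and a finite multiset $E$ of undirected edges $(u,v,t)$, $u\neq v$, with timestamp $t\in\mathbb{R}$; parallel edges are allowed. For a time interval $T$ with duration $|T|$, $\mathrm{cnt}(u,v,T)$ is the number of edges (with multiplicity) between $u$ and $v$ with timestamp in $T$; $\ell(u,v,T,\lambda)=\mathrm{cnt}(u,v,T)\log\lambda-\lambda|T|$ (with $0\log 0=0$, $c\log0=-\infty$ for $c>0$); for node sets $A,B$, $\ell(A,B,T,\lambda)$ is the sum of $\ell(a,b,T,\lambda)$ over unordered pairs $\{a,b\}$, $a\in A$, $b\in B$, $a\ne b$, each counted once. With $K=H=1$ and a partition $(P_1,P_2)$ and parameters $\lambda_{11},\lambda_{12}=\lambda_{21},\lambda_{22}\ge0$, the log-likelihood is $\mathcal{L}=\sum_{1\le i\le j\le 2}\ell(P_i,P_j,T_1,\lambda_{ij})$. The maximization is over both the partition and the parameters. *)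

theory Defs
  imports Complex_Main "HOL-Library.Multiset" "HOL-Library.Extended_Real"
begin

text \<open>A temporal graph on node type 'v is a finite multiset of edges (u,v,t) with
  real timestamps; edges are undirected (the pair {u,v} is what matters).\<close>

type_synonym 'v tedges = "('v \<times> 'v \<times> real) multiset"

definition cnt :: "'v tedges \<Rightarrow> 'v set \<Rightarrow> real \<Rightarrow> real \<Rightarrow> nat" where
  "cnt G e lo hi = size (filter_mset (\<lambda>(a,b,t). {a,b} = e \<and> lo \<le> t \<and> t \<le> hi) G)"

definition ell0 :: "nat \<Rightarrow> real \<Rightarrow> real \<Rightarrow> ereal" where
  "ell0 c lam d = (if lam = 0 then (if c = 0 then 0 else - \<infinity>)
                   else ereal (real c * ln lam - lam * d))"

definition upairs :: "'v set \<Rightarrow> 'v set \<Rightarrow> 'v set set" where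
  "upairs A B = {{a,b} | a b. a \<in> A \<and> b \<in> B \<and> a \<noteq> b}"

definition ellAB :: "'v tedges \<Rightarrow> 'v set \<Rightarrow> 'v set \<Rightarrow> real \<Rightarrow> real \<Rightarrow> real \<Rightarrow> ereal" where
  "ellAB G A B lo hi lam = (\<Sum>e\<in>upairs A B. ell0 (cnt G e lo hi) lam (hi - lo))"

text \<open>Log-likelihood with K = H = 1, R = 2, single segment T_1 = [0,1].\<close>
definition LL :: "'v tedges \<Rightarrow> 'v set \<Rightarrow> 'v set \<Rightarrow> real \<Rightarrow> real \<Rightarrow> real \<Rightarrow> ereal" where
  "LL G P1 P2 l11 l12 l22 =
     ellAB G P1 P1 0 1 l11 + ellAB G P1 P2 0 1 l12 + ellAB G P2 P2 0 1 l22"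

definition is_partition2 :: "'v set \<Rightarrow> 'v set \<Rightarrow> 'v set \<Rightarrow> bool" where
  "is_partition2 N P1 P2 \<longleftrightarrow> P1 \<union> P2 = N \<and> P1 \<inter> P2 = {}"

definition is_ML_partition :: "'v tedges \<Rightarrow> 'v set \<Rightarrow> 'v set \<Rightarrow> 'v set \<Rightarrow> bool" where
  "is_ML_partition G N P1 P2 \<longleftrightarrow> is_partition2 N P1 P2 \<and>
     (\<exists>l11 l12 l22. l11 \<ge> 0 \<and> l12 \<ge> 0 \<and> l22 \<ge> 0 \<and>
        (\<forall>Q1 Q2 m11 m12 m22. is_partition2 N Q1 Q2 \<and> m11 \<ge> 0 \<and> m12 \<ge> 0 \<and> m22 \<ge> 0
            \<longrightarrow> LL G Q1 Q2 m11 m12 m22 \<le> LL G P1 P2 l11 l12 l22))"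

datatype gnode = NU nat | NV nat | NX nat | NY nat

definition simple_graph :: "nat \<Rightarrow> (nat \<Rightarrow> nat \<Rightarrow> bool) \<Rightarrow> bool" where
  "simple_graph n E \<longleftrightarrow> (\<forall>i j. E i j \<longrightarrow> i < n \<and> j < n \<and> i \<noteq> j \<and> E j i)"

definition sedges :: "nat \<Rightarrow> (nat \<Rightarrow> nat \<Rightarrow> bool) \<Rightarrow> (nat \<times> nat) set" where
  "sedges n E = {(i,j). i < j \<and> j < n \<and> E i j}"

definition red_r :: "nat \<Rightarrow> nat" where
  "red_r n = 2^6 * (n+1)^2"

definition red_alpha :: "nat \<Rightarrow> nat \<Rightarrow> nat" where
  "red_alpha n m = max (2^20 * m^2) ((red_r n)^2)"

definition red_nodes :: "nat \<Rightarrow> gnode set" where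
  "red_nodes n = NU ` {..<n} \<union> NV ` {..<n} \<union> NX ` {..<red_r n} \<union> NY ` {..<red_r n}"

definition red_graph :: "nat \<Rightarrow> (nat \<Rightarrow> nat \<Rightarrow> bool) \<Rightarrow> gnode tedges" where
  "red_graph n E =
    (let r = red_r n; a = red_alpha n (card (sedges n E)) in
       (\<Sum>(i,j)\<in>sedges n E. {#(NU i, NU j, 1), (NV i, NV j, 1)#})
     + (\<Sum>i<n. replicate_mset (n * a) (NU i, NV i, 0))
     + (\<Sum>(x,y)\<in>{..<r} \<times> {..<r}. replicate_mset a (NX x, NY y, 0)))"

end

theory Submission
  imports Defs
begin


lemma upairs_sym: "upairs A B = upairs B A"
  unfolding upairs_def by (auto simp: insert_commute)

lemma upairs_mono: "A \<subseteq> A' \<Longrightarrow> B \<subseteq> B' \<Longrightarrow> upairs A B \<subseteq> upairs A' B'"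
  unfolding upairs_def by blast

lemma upairs_img: "upairs A B = (\<lambda>(a,b). {a,b}) ` {(a,b). a \<in> A \<and> b \<in> B \<and> a \<noteq> b}"
  unfolding upairs_def by auto

lemma finite_upairs: "finite A \<Longrightarrow> finite B \<Longrightarrow> finite (upairs A B)"
  unfolding upairs_img
  by (rule finite_imageI, rule finite_subset[of _ "A \<times> B"]) auto

lemma card_upairs_disj:
  assumes "finite A" "finite B" "A \<inter> B = {}"
  shows "card (upairs A B) = card A * card B"
proof -
  have "upairs A B = (\<lambda>(a,b). {a,b}) ` (A \<times> B)"
  proof
    show "upairs A B \<subseteq> (\<lambda>(a,b). {a,b}) ` (A \<times> B)" unfolding upairs_def by auto
    show "(\<lambda>(a,b). {a,b}) ` (A \<times> B) \<subseteq> upairs A B" unfolding upairs_def using assms(3) by fastforce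
  qed
  moreover have "inj_on (\<lambda>(a,b). {a,b}) (A \<times> B)"
    unfolding inj_on_def using assms(3) by (auto simp: doubleton_eq_iff)
  ultimately show ?thesis by (simp add: card_image card_cartesian_product)
qed

lemma upairs_self: "upairs A A = {S. S \<subseteq> A \<and> card S = 2}"
  unfolding upairs_def by (auto simp: card_2_iff)

lemma card_upairs_self: "finite A \<Longrightarrow> card (upairs A A) = card A choose 2"
  unfolding upairs_self by (simp add: n_subsets)

lemma card_upairs_self_real: "finite A \<Longrightarrow> 2 * real (card (upairs A A)) = real (card A) * (real (card A) - 1)"
proof -
  assume "finite A"
  hence "card (upairs A A) = card A * (card A - 1) div 2"
    by (simp add: card_upairs_self choose_two)
  moreover have "even (card A * (card A - 1))" by (cases "card A") auto
  ultimately have "2 * card (upairs A A) = card A * (card A - 1)" by simp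
  hence "real (2 * card (upairs A A)) = real (card A * (card A - 1))" by metis
  thus ?thesis by (cases "card A") (auto simp: of_nat_mult algebra_simps)
qed

lemma upairs_disj_AA_AB: "A \<inter> B = {} \<Longrightarrow> upairs A A \<inter> upairs A B = {}"
  unfolding upairs_def by (auto simp: doubleton_eq_iff)

lemma upairs_disj_AA_BB: "A \<inter> B = {} \<Longrightarrow> upairs A A \<inter> upairs B B = {}"
  unfolding upairs_def by (auto simp: doubleton_eq_iff)

lemma upairs_union3: "upairs (A \<union> B) (A \<union> B) = upairs A A \<union> upairs A B \<union> upairs B B"
  unfolding upairs_def by (auto simp: insert_commute)

lemma upairs_inter_self: "upairs S S \<inter> upairs X Y = upairs (S \<inter> X) (S \<inter> Y)"
  unfolding upairs_def by (auto simp: doubleton_eq_iff) blast+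

lemma upairs_inter_cross: "upairs S T \<inter> upairs X Y = upairs (S \<inter> X) (T \<inter> Y) \<union> upairs (S \<inter> Y) (T \<inter> X)"
  unfolding upairs_def by (auto simp: doubleton_eq_iff insert_commute) blast+

lemma upairs_cross_disj: "S \<inter> T = {} \<Longrightarrow> X \<inter> Y = {} \<Longrightarrow>
   upairs (S \<inter> X) (T \<inter> Y) \<inter> upairs (S \<inter> Y) (T \<inter> X) = {}"
  unfolding upairs_def by (auto simp: doubleton_eq_iff)


definition Phi :: "real \<Rightarrow> real \<Rightarrow> real" where
  "Phi C N = (if C = 0 then 0 else C * ln (C / N) - C)"

abbreviation Cb :: "'v tedges \<Rightarrow> 'v set \<Rightarrow> 'v set \<Rightarrow> nat" where
  "Cb G A B \<equiv> (\<Sum>e\<in>upairs A B. cnt G e 0 1)"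

lemma ellAB_pos:
  assumes "lam > 0"
  shows "ellAB G A B 0 1 lam = ereal (real (Cb G A B) * ln lam - lam * real (card (upairs A B)))"
proof -
  have "ellAB G A B 0 1 lam = (\<Sum>e\<in>upairs A B. ereal (real (cnt G e 0 1) * ln lam - lam))"
    unfolding ellAB_def ell0_def using assms by simp
  also have "\<dots> = ereal (\<Sum>e\<in>upairs A B. real (cnt G e 0 1) * ln lam - lam)"
    by (simp add: sum_ereal)
  also have "(\<Sum>e\<in>upairs A B. real (cnt G e 0 1) * ln lam - lam) = real (Cb G A B) * ln lam - lam * real (card (upairs A B))"
    by (simp add: sum_subtractf sum_distrib_right)
  finally show ?thesis .
qed

lemma lnbound: "C > 0 \<Longrightarrow> N > 0 \<Longrightarrow> lam > 0 \<Longrightarrow> C * ln lam - lam * N \<le> C * ln (C/N) - (C::real)"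
proof -
  assume h: "C > 0" "N > 0" "lam > 0"
  define y where "y = lam * N / C"
  have y: "y > 0" using h by (simp add: y_def)
  have "ln lam = ln (C/N) + ln y" using h by (simp add: y_def ln_mult ln_div)
  moreover have "ln y \<le> y - 1" using y by (rule ln_le_minus_one)
  ultimately have "C * ln lam \<le> C * ln (C/N) + C * (y - 1)"
    using h by (simp add: distrib_left)
  also have "C * (y - 1) = lam * N - C" using h by (simp add: y_def field_simps)
  finally show ?thesis by simp
qed

lemma ellAB_le:
  assumes "lam \<ge> 0" "finite (upairs A B)"
  shows "ellAB G A B 0 1 lam \<le> ereal (Phi (real (Cb G A B)) (real (card (upairs A B))))"
proof (cases "lam > 0")
  case True
  show ?thesis
  proof (cases "Cb G A B = 0")
    case True
    thus ?thesis using \<open>lam > 0\<close> by (simp add: ellAB_pos Phi_def)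
  next
    case False
    hence "upairs A B \<noteq> {}" by auto
    hence "card (upairs A B) > 0" using assms(2) by (simp add: card_gt_0_iff)
    hence "real (Cb G A B) * ln lam - lam * real (card (upairs A B)) \<le> Phi (real (Cb G A B)) (real (card (upairs A B)))"
      unfolding Phi_def using False \<open>lam > 0\<close> lnbound[of "real (Cb G A B)" "real (card (upairs A B))" lam]
      by (simp del: of_nat_sum)
    thus ?thesis using \<open>lam > 0\<close> by (simp add: ellAB_pos del: of_nat_sum)
  qed
next
  case False
  hence l0: "lam = 0" using assms by simp
  show ?thesis
  proof (cases "Cb G A B = 0")
    case True
    hence "\<forall>e\<in>upairs A B. cnt G e 0 1 = 0" using assms(2) by simp
    thus ?thesis unfolding ellAB_def ell0_def Phi_def using l0 True by simp
  next
    case False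
    then obtain e where e: "e \<in> upairs A B" "cnt G e 0 1 \<noteq> 0" by (metis sum.neutral)
    have "ellAB G A B 0 1 lam = ell0 (cnt G e 0 1) lam 1 + (\<Sum>f\<in>upairs A B - {e}. ell0 (cnt G f 0 1) lam 1)"
      unfolding ellAB_def using e assms(2) by (simp add: sum.remove)
    moreover have "(\<Sum>f\<in>upairs A B - {e}. ell0 (cnt G f 0 1) lam 1) \<le> 0"
      by (rule sum_nonpos) (simp add: ell0_def l0)
    moreover have "ell0 (cnt G e 0 1) lam 1 = - \<infinity>" using e l0 by (simp add: ell0_def)
    moreover have "(\<Sum>f\<in>upairs A B - {e}. ell0 (cnt G f 0 1) lam 1) \<noteq> \<infinity>"
      using calculation(2) by (cases "(\<Sum>f\<in>upairs A B - {e}. ell0 (cnt G f 0 1) lam 1)") auto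
    ultimately have "ellAB G A B 0 1 lam = - \<infinity>" by simp
    thus ?thesis by simp
  qed
qed


lemma cnt_plus: "cnt (M + N) e lo hi = cnt M e lo hi + cnt N e lo hi"
  unfolding cnt_def by simp

lemma cnt_empty: "cnt {#} e lo hi = 0" unfolding cnt_def by simp

lemma cnt_sum: "cnt (\<Sum>i\<in>I. f i) e lo hi = (\<Sum>i\<in>I. cnt (f i) e lo hi)"
proof (induction I rule: infinite_finite_induct)
  case (infinite A) thus ?case by (simp add: cnt_empty)
next
  case empty thus ?case by (simp add: cnt_empty)
next
  case (insert x F) thus ?case by (simp add: cnt_plus)
qed

lemma cnt_add: "cnt (add_mset (a,b,t) M) e lo hi = cnt M e lo hi + (if {a,b} = e \<and> lo \<le> t \<and> t \<le> hi then 1 else 0)"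
  unfolding cnt_def by simp

lemma cnt_rep: "cnt (replicate_mset k (a,b,t)) e lo hi = (if {a,b} = e \<and> lo \<le> t \<and> t \<le> hi then k else 0)"
  by (induction k) (auto simp: cnt_add cnt_empty)

lemma ind_sum_le1: "finite S \<Longrightarrow> (\<Sum>e\<in>S. (if x = e \<and> Q then 1 else 0::nat)) \<le> 1"
proof -
  assume "finite S"
  have "(\<Sum>e\<in>S. (if x = e \<and> Q then 1 else 0::nat)) \<le> (\<Sum>e\<in>S. (if x = e then 1 else 0))"
    by (rule sum_mono) auto
  also have "\<dots> \<le> 1" using \<open>finite S\<close> by (simp add: sum.delta')
  finally show ?thesis .
qed

lemma sum_cnt_le_size: "finite S \<Longrightarrow> (\<Sum>e\<in>S. cnt M e lo hi) \<le> size M"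
proof (induction M)
  case empty thus ?case by (simp add: cnt_empty)
next
  case (add x M)
  obtain a b t where x: "x = (a,b,t)" by (cases x) auto
  have "(\<Sum>e\<in>S. cnt (add_mset x M) e lo hi) = (\<Sum>e\<in>S. cnt M e lo hi) + (\<Sum>e\<in>S. (if {a,b} = e \<and> lo \<le> t \<and> t \<le> hi then 1 else 0))"
    unfolding x cnt_add by (simp add: sum.distrib)
  also have "\<dots> \<le> size M + 1" using add ind_sum_le1[OF add.prems] by (meson add_mono)
  finally show ?case by simp
qed


lemma size_sum_m: "size (\<Sum>i\<in>I. (f i :: 'a multiset)) = (\<Sum>i\<in>I. size (f i))"
  by (induction I rule: infinite_finite_induct) auto

lemma sum_if_unique:
  assumes "finite I" "ia \<in> I" "\<And>i. i \<in> I \<Longrightarrow> P i \<longleftrightarrow> i = ia"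
  shows "(\<Sum>i\<in>I. if P i then k else (0::nat)) = k"
proof -
  have "(\<Sum>i\<in>I. if P i then k else (0::nat)) = (\<Sum>i\<in>I. if i = ia then k else 0)"
    by (rule sum.cong) (use assms in auto)
  also have "\<dots> = k" using assms by (simp add: sum.delta')
  finally show ?thesis .
qed

lemma finite_sedges: "finite (sedges n E)"
  unfolding sedges_def by (rule finite_subset[of _ "{..<n} \<times> {..<n}"]) auto

locale red = fixes n :: nat and E :: "nat \<Rightarrow> nat \<Rightarrow> bool"
begin

definition "m = card (sedges n E)"
abbreviation "r \<equiv> red_r n"
abbreviation "al \<equiv> red_alpha n m"
definition "LG = (\<Sum>(i,j)\<in>sedges n E. {#(NU i, NU j, 1::real), (NV i, NV j, 1)#})"
abbreviation "Gr \<equiv> red_graph n E"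
abbreviation "Xn \<equiv> NX ` {..<r}"
abbreviation "Yn \<equiv> NY ` {..<r}"
abbreviation "Uu \<equiv> NU ` {..<n}"
abbreviation "Vv \<equiv> NV ` {..<n}"
definition "Hv = (\<lambda>i. {NU i, NV i}) ` {..<n}"
definition "XYp = upairs Xn Yn"
definition "Lw e = cnt LG e 0 1"
abbreviation "w e \<equiv> cnt Gr e 0 1"

lemma red_graph_eq: "Gr = LG + (\<Sum>i<n. replicate_mset (n*al) (NU i, NV i, 0))
     + (\<Sum>(x,y)\<in>{..<r} \<times> {..<r}. replicate_mset al (NX x, NY y, 0))"
  unfolding red_graph_def Let_def LG_def m_def by simp

lemma size_LG: "size LG = 2 * m"
  unfolding LG_def m_def by (simp add: size_sum_m case_prod_beta)

lemma sum_Lw_le: "finite S \<Longrightarrow> (\<Sum>e\<in>S. Lw e) \<le> 2 * m"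
  unfolding Lw_def using sum_cnt_le_size[of S LG 0 1] size_LG by simp

lemma Lw_nz: "Lw e \<noteq> 0 \<Longrightarrow> \<exists>i j. e = {NU i, NU j} \<or> e = {NV i, NV j}"
proof (rule ccontr)
  assume "Lw e \<noteq> 0" and h: "\<not> (\<exists>i j. e = {NU i, NU j} \<or> e = {NV i, NV j})"
  have "Lw e = (\<Sum>(i,j)\<in>sedges n E. cnt {#(NU i, NU j, 1::real), (NV i, NV j, 1)#} e 0 1)"
    unfolding Lw_def LG_def by (simp add: cnt_sum case_prod_beta)
  also have "\<dots> = 0"
    by (rule sum.neutral) (use h in \<open>auto simp: cnt_add cnt_empty\<close>, blast+)
  finally show False using \<open>Lw e \<noteq> 0\<close> by simp
qed

lemma w_eq: "w e = Lw e + (if e \<in> Hv then n*al else 0) + (if e \<in> XYp then al else 0)"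
proof -
  have s2: "(\<Sum>i<n. cnt (replicate_mset (n*al) (NU i, NV i, 0)) e 0 1) = (if e \<in> Hv then n*al else 0)"
  proof (cases "e \<in> Hv")
    case True
    then obtain i0 where i0: "i0 < n" "e = {NU i0, NV i0}" unfolding Hv_def by auto
    show ?thesis using True
      by (simp add: cnt_rep, subst sum_if_unique[where ia=i0]) (use i0 in \<open>auto simp: doubleton_eq_iff\<close>)
  next
    case False
    hence "\<forall>i<n. {NU i, NV i} \<noteq> e" unfolding Hv_def by auto
    thus ?thesis using False by (simp add: cnt_rep)
  qed
  have s3: "(\<Sum>p\<in>{..<r} \<times> {..<r}. cnt ((\<lambda>(x,y). replicate_mset al (NX x, NY y, 0)) p) e 0 1) = (if e \<in> XYp then al else 0)"
  proof (cases "e \<in> XYp")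
    case True
    then obtain x0 y0 where xy: "x0 < r" "y0 < r" "e = {NX x0, NY y0}" unfolding XYp_def upairs_def by auto
    have "(\<Sum>p\<in>{..<r} \<times> {..<r}. cnt ((\<lambda>(x,y). replicate_mset al (NX x, NY y, 0)) p) e 0 1)
        = (\<Sum>p\<in>{..<r} \<times> {..<r}. if {NX (fst p), NY (snd p)} = e then al else 0)"
      by (rule sum.cong) (simp_all add: cnt_rep split_beta)
    also have "\<dots> = al"
      by (rule sum_if_unique[where ia="(x0,y0)"]) (use xy in \<open>auto simp: doubleton_eq_iff\<close>)
    finally show ?thesis using True by simp
  next
    case False
    hence h: "\<forall>x<r. \<forall>y<r. {NX x, NY y} \<noteq> e" unfolding XYp_def upairs_def by blast
    have "(\<Sum>p\<in>{..<r} \<times> {..<r}. cnt ((\<lambda>(x,y). replicate_mset al (NX x, NY y, 0)) p) e 0 1) = 0"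
      by (rule sum.neutral) (use h in \<open>auto simp: cnt_rep\<close>)
    thus ?thesis using False by simp
  qed
  show ?thesis
    unfolding red_graph_eq cnt_plus cnt_sum Lw_def[symmetric] using s2 s3 by (simp only:)
qed

end


lemma sum_if_mem: "finite S \<Longrightarrow> (\<Sum>e\<in>S. if e \<in> H then k else (0::nat)) = k * card (S \<inter> H)"
  by (simp add: sum.If_cases Int_def)

context red begin

abbreviation "V \<equiv> red_nodes n"
abbreviation "W \<equiv> Uu \<union> Vv"
abbreviation "XY \<equiv> Xn \<union> Yn"

lemma V_eq: "V = XY \<union> W" unfolding red_nodes_def by auto

lemma finite_V: "finite V" unfolding red_nodes_def by simp

lemma card_Xn: "card Xn = r" by (simp add: card_image inj_on_def)
lemma card_Yn: "card Yn = r" by (simp add: card_image inj_on_def)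
lemma card_Uu: "card Uu = n" by (simp add: card_image inj_on_def)
lemma card_Vv: "card Vv = n" by (simp add: card_image inj_on_def)

lemma disj: "Xn \<inter> Yn = {}" "XY \<inter> W = {}" "Uu \<inter> Vv = {}" "Xn \<inter> W = {}" "Yn \<inter> W = {}" by auto

lemma Hv_sub: "Hv \<subseteq> upairs Uu Vv" unfolding Hv_def upairs_def by auto
lemma Hv_subW: "Hv \<subseteq> upairs W W" using Hv_sub upairs_mono[of Uu W Vv W] by auto

lemma card_Hv: "card Hv = n"
  unfolding Hv_def by (subst card_image) (auto simp: inj_on_def doubleton_eq_iff)

lemma card_XYp: "card XYp = r * r"
  unfolding XYp_def by (subst card_upairs_disj) (auto simp: card_Xn card_Yn)

lemma XYp_W: "XYp \<inter> upairs W W = {}" unfolding XYp_def upairs_def by (auto simp: doubleton_eq_iff)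

lemma XYp_sub: "XYp \<subseteq> upairs V V" unfolding XYp_def using V_eq upairs_mono[of Xn V Yn V] by auto

lemma Hv_subV: "Hv \<subseteq> upairs V V" using Hv_subW V_eq upairs_mono[of W V W V] by auto

lemma Lw_out: "e \<in> upairs V V \<Longrightarrow> e \<notin> upairs W W \<Longrightarrow> Lw e = 0"
proof (rule ccontr)
  assume e: "e \<in> upairs V V" "e \<notin> upairs W W" "Lw e \<noteq> 0"
  obtain i j where ij: "e = {NU i, NU j} \<or> e = {NV i, NV j}" using Lw_nz[OF e(3)] by auto
  obtain a b where ab: "e = {a,b}" "a \<in> V" "b \<in> V" "a \<noteq> b" using e(1) unfolding upairs_def by auto
  have "a \<in> W" "b \<in> W" using ij ab unfolding red_nodes_def by (auto simp: doubleton_eq_iff)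
  hence "e \<in> upairs W W" using ab unfolding upairs_def by auto
  thus False using e(2) by simp
qed

lemma Lw_UV: "e \<in> upairs Uu Vv \<Longrightarrow> Lw e = 0"
proof (rule ccontr)
  assume e: "e \<in> upairs Uu Vv" "Lw e \<noteq> 0"
  obtain i j where ij: "e = {NU i, NU j} \<or> e = {NV i, NV j}" using Lw_nz[OF e(2)] by auto
  obtain a b where ab: "e = {a,b}" "a \<in> Uu" "b \<in> Vv" using e(1) unfolding upairs_def by auto
  show False using ij ab by (auto simp: doubleton_eq_iff)
qed

definition CW :: "gnode set set \<Rightarrow> nat" where "CW S = (\<Sum>e\<in>S. w e)"

lemma wsum: "finite S \<Longrightarrow> CW S = (\<Sum>e\<in>S. Lw e) + n*al*card (S \<inter> Hv) + al*card (S \<inter> XYp)"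
  unfolding CW_def w_eq by (simp add: sum.distrib sum_if_mem)

lemma CW_union: "finite S \<Longrightarrow> finite T \<Longrightarrow> S \<inter> T = {} \<Longrightarrow> CW (S \<union> T) = CW S + CW T"
  unfolding CW_def by (rule sum.union_disjoint)

lemma CW_mono: "finite T \<Longrightarrow> S \<subseteq> T \<Longrightarrow> CW S \<le> CW T"
  unfolding CW_def by (rule sum_mono2) auto

definition "Ltot = (\<Sum>e\<in>upairs V V. Lw e)"
lemma Ltot_le: "Ltot \<le> 2*m" unfolding Ltot_def by (rule sum_Lw_le) (simp add: finite_upairs finite_V)

lemma Tot: "CW (upairs V V) = Ltot + n*al*n + al*(r*r)"
proof -
  have "upairs V V \<inter> Hv = Hv" "upairs V V \<inter> XYp = XYp" using Hv_subV XYp_sub by auto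
  thus ?thesis by (simp add: wsum finite_upairs finite_V Ltot_def card_Hv card_XYp)
qed

end


context red begin

definition "part A B \<longleftrightarrow> A \<union> B = V \<and> A \<inter> B = {}"

lemma part_fin: "part A B \<Longrightarrow> finite A \<and> finite B"
  unfolding part_def using finite_V by (metis finite_Un)

lemma block_sum:
  assumes "part A B"
  shows "CW (upairs A A) + CW (upairs A B) + CW (upairs B B) = Ltot + n*al*n + al*(r*r)"
proof -
  have f: "finite A" "finite B" using part_fin[OF assms] by auto
  have dj: "A \<inter> B = {}" "A \<union> B = V" using assms unfolding part_def by auto
  have "upairs V V = upairs A A \<union> upairs A B \<union> upairs B B" using dj(2) upairs_union3 by metis
  moreover have "(upairs A A \<union> upairs A B) \<inter> upairs B B = {}"
    using upairs_disj_AA_BB[OF dj(1)] upairs_disj_AA_AB[of B A] dj(1) upairs_sym[of A B] by auto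
  moreover have "upairs A A \<inter> upairs A B = {}" using upairs_disj_AA_AB[OF dj(1)] .
  ultimately have "CW (upairs V V) = CW (upairs A A) + CW (upairs A B) + CW (upairs B B)"
    using f by (simp add: CW_union finite_upairs)
  thus ?thesis using Tot by simp
qed

abbreviation "PA \<equiv> Xn \<union> Uu"
abbreviation "PB \<equiv> Yn \<union> Vv"

lemma partP: "part PA PB" unfolding part_def red_nodes_def by auto

lemma star_cross_C: "CW (upairs PA PB) = n*al*n + al*(r*r)"
proof -
  have fin: "finite (upairs PA PB)" by (simp add: finite_upairs)
  have "(\<Sum>e\<in>upairs PA PB. Lw e) = 0"
  proof (rule sum.neutral, rule ballI)
    fix e assume e: "e \<in> upairs PA PB"
    have eV: "e \<in> upairs V V" using e upairs_mono[of PA V PB V] unfolding red_nodes_def by auto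
    show "Lw e = 0"
    proof (cases "e \<in> upairs W W")
      case False thus ?thesis using Lw_out eV by simp
    next
      case True
      have "e \<in> upairs Uu Vv" using True e unfolding upairs_def by (auto simp: doubleton_eq_iff)
      thus ?thesis by (rule Lw_UV)
    qed
  qed
  moreover have "upairs PA PB \<inter> Hv = Hv" using Hv_sub upairs_mono[of Uu PA Vv PB] by auto
  moreover have "upairs PA PB \<inter> XYp = XYp" unfolding XYp_def using upairs_mono[of Xn PA Yn PB] by auto
  ultimately show ?thesis using fin by (simp add: wsum card_Hv card_XYp)
qed

lemma card_PA: "card PA = r + n"
  by (subst card_Un_disjoint) (auto simp: card_Xn card_Uu)
lemma card_PB: "card PB = r + n"
  by (subst card_Un_disjoint) (auto simp: card_Yn card_Vv)

lemma star_cross_N: "card (upairs PA PB) = (r+n)*(r+n)"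
proof -
  have "card PA = r + n" "card PB = r + n" by (rule card_PA, rule card_PB)
  thus ?thesis by (subst card_upairs_disj) auto
qed

lemma star_w_N: "2 * real (card (upairs PA PA)) = real (r+n) * (real (r+n) - 1)"
                "2 * real (card (upairs PB PB)) = real (r+n) * (real (r+n) - 1)"
proof -
  have "card PA = r + n" "card PB = r + n" by (rule card_PA, rule card_PB)
  thus "2 * real (card (upairs PA PA)) = real (r+n) * (real (r+n) - 1)"
       "2 * real (card (upairs PB PB)) = real (r+n) * (real (r+n) - 1)"
    using card_upairs_self_real[of PA] card_upairs_self_real[of PB] by auto
qed

end


context red begin

lemma Cb_CW: "Cb Gr A B = CW (upairs A B)" unfolding CW_def by simp

definition "PhiSum A B = Phi (real (CW (upairs A A))) (real (card (upairs A A)))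
   + Phi (real (CW (upairs A B))) (real (card (upairs A B)))
   + Phi (real (CW (upairs B B))) (real (card (upairs B B)))"

lemma PhiSum_sym: "PhiSum A B = PhiSum B A"
  unfolding PhiSum_def using upairs_sym[of A B] by simp

abbreviation "Nw \<equiv> card (upairs PA PA)"

lemma Nw_eq: "card (upairs PB PB) = Nw"
  using star_w_N by simp

lemma Nw_pos: "Nw > 0"
proof -
  have "r \<ge> 64" unfolding red_r_def by simp
  hence "real (r+n) * (real (r+n) - 1) > 0" by simp
  thus ?thesis using star_w_N(1) by (metis gr0I mult_zero_right of_nat_0 linorder_not_less order_refl)
qed

definition "Hval rho = real (n*al*n + al*(r*r)) * ln rho - rho * real ((r+n)*(r+n)) - real Ltot * ln (real Nw) - 2"

lemma within_star: "CW (upairs PA PA) + CW (upairs PB PB) = Ltot"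
  using block_sum[OF partP] star_cross_C by simp

lemma LLstar: "rho > 0 \<Longrightarrow> LL Gr PA PB (1 / real Nw) rho (1 / real Nw) = ereal (Hval rho)"
proof -
  assume rp: "rho > 0"
  have Np: "real Nw > 0" using Nw_pos by simp
  have "LL Gr PA PB (1 / real Nw) rho (1 / real Nw) =
     ereal (real (CW (upairs PA PA)) * ln (1 / real Nw) - 1 / real Nw * real Nw)
   + ereal (real (CW (upairs PA PB)) * ln rho - rho * real (card (upairs PA PB)))
   + ereal (real (CW (upairs PB PB)) * ln (1 / real Nw) - 1 / real Nw * real Nw)"
    unfolding LL_def using rp Np by (simp add: ellAB_pos Cb_CW Nw_eq del: of_nat_sum)
  also have "\<dots> = ereal (Hval rho)"
  proof -
    have "real (CW (upairs PA PA)) + real (CW (upairs PB PB)) = real Ltot"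
      using within_star by (metis of_nat_add)
    moreover have e: "x * ln (1 / N) + y * ln (1 / N) = - ((x + y) * ln N)" if "N > 0" for x y N :: real
      using that by (simp add: ln_div algebra_simps)
    ultimately have "real (CW (upairs PA PA)) * ln (1 / real Nw) + real (CW (upairs PB PB)) * ln (1 / real Nw)
        = - (real Ltot * ln (real Nw))" using Np by (simp only: e)
    thus ?thesis unfolding Hval_def using Np star_cross_C star_cross_N by simp
  qed
  finally show ?thesis .
qed

lemma LL_le_PhiSum:
  assumes "part A B" "l11 \<ge> 0" "l12 \<ge> 0" "l22 \<ge> 0"
  shows "LL Gr A B l11 l12 l22 \<le> ereal (PhiSum A B)"
proof -
  have f: "finite A" "finite B" using part_fin[OF assms(1)] by auto
  have "LL Gr A B l11 l12 l22 \<le> ereal (Phi (real (CW (upairs A A))) (real (card (upairs A A))))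
     + ereal (Phi (real (CW (upairs A B))) (real (card (upairs A B))))
     + ereal (Phi (real (CW (upairs B B))) (real (card (upairs B B))))"
    unfolding LL_def
    using ellAB_le[OF assms(2), of A A Gr] ellAB_le[OF assms(3), of A B Gr] ellAB_le[OF assms(4), of B B Gr] f
    by (intro add_mono) (auto simp: finite_upairs Cb_CW simp del: of_nat_sum)
  thus ?thesis unfolding PhiSum_def by simp
qed

lemma mlcontra:
  assumes "is_ML_partition Gr V A B" "rho > 0" "PhiSum A B < Hval rho"
  shows False
proof -
  obtain l11 l12 l22 where l: "l11 \<ge> 0" "l12 \<ge> 0" "l22 \<ge> 0"
    and mx: "\<And>Q1 Q2 m11 m12 m22. is_partition2 V Q1 Q2 \<Longrightarrow> m11 \<ge> 0 \<Longrightarrow> m12 \<ge> 0 \<Longrightarrow> m22 \<ge> 0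
            \<Longrightarrow> LL Gr Q1 Q2 m11 m12 m22 \<le> LL Gr A B l11 l12 l22"
    using assms(1) unfolding is_ML_partition_def by blast
  have pAB: "part A B" using assms(1) unfolding is_ML_partition_def is_partition2_def part_def by blast
  have "is_partition2 V PA PB" using partP unfolding part_def is_partition2_def by blast
  hence "LL Gr PA PB (1 / real Nw) rho (1 / real Nw) \<le> LL Gr A B l11 l12 l22"
    using assms(2) by (intro mx) auto
  also have "\<dots> \<le> ereal (PhiSum A B)" by (rule LL_le_PhiSum[OF pAB l])
  finally have "Hval rho \<le> PhiSum A B" using LLstar[OF assms(2)] by simp
  thus False using assms(3) by simp
qed

end


lemma logb:
  fixes al m X :: real
  assumes "al \<ge> 1" "2^20 * m^2 \<le> al" "m \<ge> 0" "0 < X" "X \<le> 4 * al^2"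
  shows "2 * m * ln X \<le> al / 16"
proof -
  define s where "s = sqrt al"
  have s1: "s \<ge> 1" using assms(1) unfolding s_def by simp
  have als: "al = s^2" unfolding s_def using assms(1) by simp
  have ms2: "(1024 * m)^2 \<le> s^2" using assms(2) als by (simp add: power_mult_distrib)
  have ms: "1024 * m \<le> s" by (rule power2_le_imp_le[OF ms2]) (use s1 in simp)
  have lns: "ln s \<le> s - 1" using s1 by (intro ln_le_minus_one) auto
  have "ln X \<le> ln (4 * al^2)" using assms(1,4,5) by (subst ln_le_cancel_iff) auto
  also have "ln (4 * al^2) = ln 4 + 4 * ln s" using s1 als by (simp add: ln_mult ln_realpow)
  also have "ln (4::real) \<le> 2"
  proof -
    have "ln (4::real) \<le> 4 - 1" by (intro ln_le_minus_one) auto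
    hence "ln (4::real) \<le> 3" by simp
    have "ln (4::real) = 2 * ln 2" using ln_mult[of 2 2] by simp
    moreover have "ln (2::real) \<le> 1" using ln_le_minus_one[of 2] by simp
    ultimately show ?thesis by simp
  qed
  hence "ln 4 + 4 * ln s \<le> 2 + 4 * (s - 1)" using lns by simp
  finally have lx: "ln X \<le> 4 * s" by simp
  have "ln X \<ge> ln 1 \<or> ln X < 0" by auto
  show ?thesis
  proof (cases "ln X \<ge> 0")
    case True
    have "2 * m * ln X \<le> 2 * m * (4 * s)" using lx assms(3) by (intro mult_left_mono) auto
    also have "\<dots> = 8 * (m * s)" by simp
    also have "\<dots> \<le> 8 * (s / 1024 * s)" using ms s1 by (intro mult_left_mono mult_right_mono) auto
    also have "\<dots> \<le> al / 16" using als by (simp add: power2_eq_square)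
    finally show ?thesis .
  next
    case False
    hence "2 * m * ln X \<le> 0" using assms(3) by (simp add: mult_nonneg_nonpos)
    thus ?thesis using assms(1) by simp
  qed
qed

lemma num1:
  fixes R N qw :: real
  assumes "R = 64 * (N+1)^2" "N \<ge> 0" "R \<le> qw"
  shows "(R^2 - qw) * (R / (R + 2*N)) + 3/4 * qw + 1/2 \<le> (R - N)^2 - 3 * N^2 - 2"
proof -
  have sq: "(N+1)^2 = N^2 + 2*N + 1" by (simp add: power2_eq_square algebra_simps)
  have "N^2 \<ge> 0" "N \<le> N^2 + 2*N + 1" using assms(2) by simp_all
  hence R64: "R \<ge> 64" and RN: "R \<ge> 64 * N^2" "R \<ge> 64 * N" using assms(1,2) sq by linarith+
  have pos: "R + 2*N > 0" using R64 assms(2) by simp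
  define rho where "rho = R / (R + 2*N)"
  have rho34: "rho \<ge> 3/4" unfolding rho_def using pos RN by (simp add: field_simps)
  have c1: "(R^2 - qw) * rho + 3/4 * qw \<le> R^2 * rho - R * (rho - 3/4)"
  proof -
    have "qw * (rho - 3/4) \<ge> R * (rho - 3/4)" using assms(3) rho34 by (intro mult_right_mono) auto
    thus ?thesis by (simp add: algebra_simps)
  qed
  have big: "R^3 - R^2 + (3*R/4 + 1/2) * (R + 2*N) \<le> ((R-N)^2 - 3*N^2 - 2) * (R + 2*N)"
  proof -
    have e: "((R-N)^2 - 3*N^2 - 2) * (R + 2*N) - (R^3 - R^2 + (3*R/4 + 1/2) * (R + 2*N))
          = R^2/4 - 6*R*N^2 - 3*R*N/2 - 5*R/2 - 4*N^3 - 5*N"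
      by (simp add: power2_eq_square power3_eq_cube algebra_simps)
    have "R^2/4 = 16*R*N^2 + 32*R*N + 16*R" using assms(1) by (simp add: power2_eq_square algebra_simps)
    moreover have "R*N^2 \<ge> 0" "R*N \<ge> 0" using R64 assms(2) by simp_all
    moreover have "R*N \<ge> 64*N^2*N" using RN(1) assms(2) by (simp add: mult_right_mono)
    moreover have "N^3 = N^2*N" by (simp add: power3_eq_cube power2_eq_square)
    moreover have "R * N \<ge> 64 * N" using R64 assms(2) by (simp add: mult_right_mono)
    ultimately have "R^2/4 - 6*R*N^2 - 3*R*N/2 - 5*R/2 - 4*N^3 - 5*N \<ge> 0" using R64 by linarith
    thus ?thesis using e by linarith
  qed
  have e1: "R^2 * rho - R * (rho - 3/4) + 1/2 = (R^2 - R) * rho + (3*R/4 + 1/2)" by (simp add: algebra_simps)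
  have e2: "(R^2 - R) * rho = (R^3 - R^2) / (R + 2*N)"
    unfolding rho_def times_divide_eq_right by (simp add: power2_eq_square power3_eq_cube algebra_simps)
  have e3: "(R^3 - R^2) / (R + 2*N) + (3*R/4 + 1/2) = (R^3 - R^2 + (3*R/4 + 1/2) * (R + 2*N)) / (R + 2*N)"
    using pos by (simp add: field_simps)
  have "R^2 * rho - R * (rho - 3/4) + 1/2 = (R^3 - R^2 + (3*R/4 + 1/2) * (R + 2*N)) / (R + 2*N)"
    using e1 e2 e3 by simp
  also have "\<dots> \<le> ((R-N)^2 - 3*N^2 - 2) * (R + 2*N) / (R + 2*N)"
    using big pos by (intro divide_right_mono) auto
  also have "\<dots> = (R-N)^2 - 3*N^2 - 2" using pos by simp
  finally show ?thesis using c1 unfolding rho_def by linarith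
qed


lemma rbasics:
  fixes r n :: real
  assumes "r = 64*(n+1)^2" "n \<ge> 0"
  shows "r \<ge> 64" "r \<ge> 64*n" "r \<ge> 64*n^2" "(r+n)^2 \<le> 2*r^2" "r^2 \<ge> 4096*n^2" "r^2 \<ge> 4096"
proof -
  have sq: "(n+1)^2 = n^2 + 2*n + 1" by (simp add: power2_eq_square algebra_simps)
  have "n^2 \<ge> 0" by simp
  thus r1: "r \<ge> 64" and r2: "r \<ge> 64*n" and r3: "r \<ge> 64*n^2" using assms sq by linarith+
  have "(r+n)^2 = r^2 + 2*(r*n) + n^2" by (simp add: power2_eq_square algebra_simps)
  moreover have "64 * (r*n) \<le> r*r" using r2 r1 by (simp add: mult_left_mono)
  moreover have "64 * 64 * n^2 \<le> r * r"
  proof -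
    have "(64*n)*(64*n) \<le> r*r" using r2 assms(2) by (intro mult_mono) auto
    thus ?thesis by (simp add: power2_eq_square)
  qed
  moreover have "0 \<le> r*r" by simp
  ultimately show "(r+n)^2 \<le> 2*r^2" unfolding power2_eq_square by linarith
  have "(64*n)*(64*n) \<le> r*r" using r2 assms(2) by (intro mult_mono) auto
  thus "r^2 \<ge> 4096*n^2" by (simp add: power2_eq_square)
  have "64*64 \<le> r*r" using r1 by (intro mult_mono) auto
  thus "r^2 \<ge> 4096" by (simp add: power2_eq_square)
qed

lemma lin_case1:
  fixes HL LL LN A B PhiS Qa nm al Lt H :: real
  assumes "PhiS \<le> HL + LL + Qa - 2 * H - 2* Lt" "Qa \<le> B - 2 * al + 12 * nm + 3"
    "12 * nm \<le> al / 1000" "LL + LN \<le> al / 16" "2 * H = A + B" "4096 \<le> al" "0 \<le> Lt"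
  shows "PhiS < HL - A - LN - 2"
  using assms by linarith

lemma case1_final:
  fixes al m r n Lt Nw Qc PhiS H :: real
  assumes "al \<ge> 2^20*m^2" "al \<ge> r^2" "r = 64*(n+1)^2" "n \<ge> 0" "m \<ge> 0"
    "0 \<le> Lt" "Lt \<le> 2*m" "1 \<le> Nw" "Nw \<le> (r+n)^2"
    "Qc \<le> al^2*((r-n)^2 - 3*n^2 - 2) + 3*(n*al + 2*m)^2"
    "PhiS \<le> (H + Lt)*ln al + Qc/al - 2*(H + Lt)" "H = (r^2+n^2)*al" "n \<le> m"
  shows "PhiS < H*ln al - al*(r+n)^2 - Lt*ln Nw - 2"
proof -
  note rb = rbasics[OF assms(3,4)]
  have al4: "al \<ge> 4096" using rb(6) assms(2) by linarith
  have alp: "al > 0" using al4 by simp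
  have m2: "m^2 \<le> al / 1048576" using assms(1) by simp
  have nm: "n*m \<le> m^2" using assms(13) assms(5) by (simp add: power2_eq_square mult_right_mono)
  have e1: "(n*al + 2*m)^2 / al = n^2*al + 4*(n*m) + 4*m^2/al"
    using alp by (simp add: power2_eq_square field_simps)
  have "4*m^2/al \<le> 1" using m2 alp by (simp add: field_simps)
  hence e2: "(n*al + 2*m)^2 / al \<le> n^2*al + 4*(n*m) + 1" using e1 by linarith
  have "Qc/al \<le> (al^2*((r-n)^2 - 3*n^2 - 2) + 3*(n*al + 2*m)^2)/al"
    using assms(10) alp by (simp add: divide_right_mono)
  also have "\<dots> = al*((r-n)^2 - 3*n^2 - 2) + 3*((n*al + 2*m)^2/al)"
    using alp by (simp add: add_divide_distrib power2_eq_square)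
  finally have q1: "Qc/al \<le> al*(r-n)^2 - 2*al + 12*(n*m) + 3"
    using e2 by (simp add: algebra_simps)
  have q2: "12*(n*m) \<le> al/1000" using nm m2 al4 by linarith
  have X: "al * Nw \<le> 4 * al^2"
  proof -
    have "Nw \<le> 2 * r^2" using assms(9) rb(4) by linarith
    also have "\<dots> \<le> 4 * al" using assms(2) al4 by linarith
    finally show ?thesis using alp by (simp add: power2_eq_square mult_left_mono)
  qed
  have a1: "al \<ge> 1" using al4 by linarith
  have aN: "1 \<le> al*Nw" using mult_mono[OF a1 assms(8)] a1 by simp
  have lg: "2*m*ln (al*Nw) \<le> al/16"
    by (rule logb[OF a1 assms(1) assms(5) _ X]) (use aN in linarith)
  have lnn: "ln (al*Nw) \<ge> 0" using aN by (rule ln_ge_zero)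
  have "Lt * ln (al*Nw) \<le> 2*m * ln (al*Nw)" using assms(7) lnn by (rule mult_right_mono)
  moreover have "ln (al*Nw) = ln al + ln Nw" using alp assms(8) by (simp add: ln_mult)
  ultimately have lt: "Lt*ln al + Lt*ln Nw \<le> al/16" using lg by (simp add: distrib_left)
  have hh: "2*H = al*(r+n)^2 + al*(r-n)^2" using assms(12) by (simp add: power2_eq_square algebra_simps)
  have "(H + Lt)*ln al = H*ln al + Lt*ln al" by (simp add: distrib_right)
  hence "PhiS \<le> H*ln al + Lt*ln al + Qc/al - 2*H - 2*Lt" using assms(11) by simp
  thus ?thesis by (rule lin_case1[OF _ q1 q2 lt hh al4 assms(6)])
qed

lemma exp3: "ln (27::real) \<ge> 3"
proof -
  have "exp (3::real) = exp 1 ^ 3" using exp_of_nat_mult[of 3 1] by simp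
  also have "\<dots> \<le> 3^3" using exp_le by (intro power_mono) auto
  finally have "exp (3::real) \<le> 27" by simp
  hence "ln (exp (3::real)) \<le> ln 27" by (subst ln_le_cancel_iff) auto
  thus ?thesis by simp
qed

lemma phi_block:
  fixes C N rho :: real
  assumes "C \<ge> 0" "N > 0" "rho > 0" "C > 0 \<Longrightarrow> 27 * C \<le> rho * N"
  shows "Phi C N \<le> C * ln rho - 4 * C"
proof (cases "C = 0")
  case True thus ?thesis by (simp add: Phi_def)
next
  case False
  hence Cp: "C > 0" using assms by simp
  have "ln (rho * N / C) \<ge> ln 27" using assms Cp by (subst ln_le_cancel_iff) (auto simp: field_simps)
  hence l3: "ln (rho * N / C) \<ge> 3" using exp3 by linarith
  have "ln (C/N) = ln rho - ln (rho * N / C)" using Cp assms by (simp add: ln_div ln_mult)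
  hence "ln (C/N) \<le> ln rho - 3" using l3 by simp
  hence "C * ln (C/N) \<le> C * (ln rho - 3)" using Cp by (simp add: mult_left_mono)
  thus ?thesis using False by (simp add: Phi_def algebra_simps)
qed


lemma lin_case2:
  fixes HL CcL CAL CBL LtL LtN PA PB Cc CA CB Z al tna :: real
  assumes "HL = CAL + CBL + CcL - LtL" "PA \<le> CAL - 4*CA" "PB \<le> CBL - 4*CB"
    "Z \<le> 2*tna" "LtL + LtN \<le> al/16" "CA + CB \<ge> tna" "tna \<ge> al" "al \<ge> 4096"
  shows "(CcL - Cc) + PA + PB < HL - (Cc + Z) - LtN - 2"
  using assms by linarith

lemma case2_final:
  fixes al m r n Lt Nw H Cc Nc CA CB NA NB t :: real
  assumes "al \<ge> 2^20*m^2" "al \<ge> r^2" "r = 64*(n+1)^2" "n \<ge> 1" "m \<ge> 0" "0 \<le> Lt" "Lt \<le> 2*m"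
    "1 \<le> Nw" "Nw \<le> (r+n)^2" "H = (r^2+n^2)*al"
    "CA + CB + Cc = H + Lt" "Cc \<ge> r^2*al" "Nc \<ge> r^2" "Nc \<le> (r+n)^2" "(r+n)^2 - Nc \<le> t*n"
    "CA + CB \<ge> t*n*al" "t \<ge> 1" "2*NA \<ge> r*(r-1)" "2*NB \<ge> r*(r-1)" "CA \<ge> 0" "CB \<ge> 0"
  shows "Phi Cc Nc + Phi CA NA + Phi CB NB < H*ln(Cc/Nc) - (Cc/Nc)*(r+n)^2 - Lt*ln Nw - 2"
proof -
  note rb = rbasics[of r n, OF assms(3)] 
  have n0: "n \<ge> 0" using assms(4) by simp
  note rb = rb[OF n0]
  have al4: "al \<ge> 4096" using rb(6) assms(2) by linarith
  have a1: "al \<ge> 1" using al4 by linarith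
  have Ncp: "Nc > 0" using assms(13) rb(6) by linarith
  have Ccp: "Cc > 0" using assms(12) rb(6) al4
    by (smt (verit) mult_pos_pos)
  define rho where "rho = Cc / Nc"
  have rho_lo: "rho \<ge> al/2"
  proof -
    have "al/2 * Nc \<le> al/2 * (2*r^2)" using assms(14) rb(4) al4 by (intro mult_left_mono) auto
    also have "\<dots> = r^2 * al" by simp
    also have "\<dots> \<le> Cc" using assms(12) .
    finally show ?thesis unfolding rho_def using Ncp by (simp add: le_divide_eq)
  qed
  have m2a: "2*m \<le> al"
  proof (cases "m \<le> 1")
    case True thus ?thesis using al4 by linarith
  next
    case False
    hence "m \<le> m^2" by (simp add: power2_eq_square)
    moreover have "1048576 * m^2 \<le> al" using assms(1) by simp
    ultimately show ?thesis using False by linarith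
  qed
  have n2: "n^2 \<ge> 1" using assms(4) by (simp add: one_le_power)
  have n2al: "al \<le> n^2 * al" using n2 a1 by simp
  have f1: "4096 * (n^2 * al) \<le> r^2 * al"
  proof -
    have "(4096 * n^2) * al \<le> r^2 * al" using rb(5) a1 by (intro mult_right_mono) auto
    thus ?thesis by (simp add: algebra_simps)
  qed
  have f2: "4096 * al \<le> r^2 * al" using rb(6) a1 by (intro mult_right_mono) auto
  have hh: "H = r^2 * al + n^2 * al" using assms(10) by (simp add: algebra_simps)
  have HLt: "H + Lt \<le> 2 * (r^2 * al)" using f1 f2 hh assms(7) m2a a1 by linarith
  have Cc_le: "Cc \<le> H + Lt" using assms(11,20,21) by linarith
  have rho_hi: "rho \<le> 2*al"
  proof -
    have "Cc \<le> 2*al * r^2" using Cc_le HLt by (simp add: algebra_simps)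
    also have "\<dots> \<le> 2*al * Nc" using assms(13) al4 by (intro mult_left_mono) auto
    finally show ?thesis unfolding rho_def using Ncp by (simp add: divide_le_eq)
  qed
  have rhop: "rho > 0" using rho_lo al4 by linarith
  have phic: "Phi Cc Nc = Cc * ln rho - Cc" using Ccp unfolding Phi_def rho_def by simp
  have CAb: "CA \<le> 2*n^2*al" using assms(11,12,21,10,7) m2a n2al by (simp add: algebra_simps)
  have CBb: "CB \<le> 2*n^2*al" using assms(11,12,20,10,7) m2a n2al by (simp add: algebra_simps)
  have rr: "r*(r-1) \<ge> r^2/2"
  proof -
    have "2*r \<le> r*r" using rb(1) by (intro mult_right_mono) auto
    moreover have "r*(r-1) = r*r - r" by (simp add: algebra_simps)
    moreover have "r^2 = r*r" by (simp add: power2_eq_square)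
    ultimately show ?thesis by linarith
  qed
  have blk: "27 * Cb \<le> rho * Nb" if "Cb \<le> 2*n^2*al" "2*Nb \<ge> r*(r-1)" for Cb Nb
  proof -
    have "27 * Cb \<le> 54 * (n^2 * al)" using that(1) by (simp add: mult.commute mult.left_commute)
    also have "\<dots> \<le> al/2 * (r^2/4) "
    proof -
      have "512 * (n^2) \<le> r^2/8" using rb(5) by simp
      hence "512 * (n^2) * al \<le> r^2/8 * al" using a1 by (intro mult_right_mono) auto
      moreover have "0 \<le> n^2 * al" using a1 by simp
      ultimately show ?thesis by (simp add: algebra_simps)
    qed
    also have "\<dots> \<le> al/2 * Nb" using that(2) rr al4 by (intro mult_left_mono) auto
    also have "\<dots> \<le> rho * Nb"
    proof -
      have "Nb \<ge> 0" using that(2) rr rb(6) by simp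
      thus ?thesis using rho_lo by (intro mult_right_mono) auto
    qed
    finally show ?thesis .
  qed
  have NAp: "NA > 0" using assms(18) rr rb(6) by simp
  have NBp: "NB > 0" using assms(19) rr rb(6) by simp
  have pA: "Phi CA NA \<le> CA * ln rho - 4*CA"
    by (rule phi_block[OF assms(20) NAp rhop]) (use blk[OF CAb assms(18)] in simp)
  have pB: "Phi CB NB \<le> CB * ln rho - 4*CB"
    by (rule phi_block[OF assms(21) NBp rhop]) (use blk[OF CBb assms(19)] in simp)
  have rhoN: "rho * Nc = Cc" unfolding rho_def using Ncp by simp
  define Z where "Z = rho * ((r+n)^2 - Nc)"
  have rz: "rho * (r+n)^2 = Cc + Z" unfolding Z_def using rhoN by (simp add: algebra_simps)
  have Zb: "Z \<le> 2*(t*n*al)"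
  proof -
    have "Z \<le> (2*al) * (t*n)" unfolding Z_def using rho_hi assms(14,15) rhop by (intro mult_mono) auto
    thus ?thesis by (simp add: algebra_simps)
  qed
  have X: "rho * Nw \<le> 4 * al^2"
  proof -
    have "rho * Nw \<le> (2*al) * (2*r^2)" using rho_hi assms(9) rb(4) rhop assms(8) by (intro mult_mono) auto
    also have "\<dots> \<le> (2*al) * (2*al)" using assms(2) al4 by (intro mult_left_mono) auto
    finally show ?thesis by (simp add: power2_eq_square)
  qed
  have rN1: "1 \<le> rho * Nw" using mult_mono[of 1 rho 1 Nw] rho_lo al4 assms(8) by simp
  have lg: "2*m*ln (rho*Nw) \<le> al/16"
    by (rule logb[OF a1 assms(1) assms(5) _ X]) (use rN1 in linarith)
  have lnn: "ln (rho*Nw) \<ge> 0" using rN1 by (rule ln_ge_zero)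
  have "Lt * ln (rho*Nw) \<le> 2*m * ln (rho*Nw)" using assms(7) lnn by (rule mult_right_mono)
  moreover have "ln (rho*Nw) = ln rho + ln Nw" using rhop assms(8) by (simp add: ln_mult)
  ultimately have lt: "Lt*ln rho + Lt*ln Nw \<le> al/16" using lg by (simp add: distrib_left)
  have hl: "H * ln rho = CA * ln rho + CB * ln rho + Cc * ln rho - Lt * ln rho"
  proof -
    have "H = CA + CB + Cc - Lt" using assms(11) by simp
    hence "H * ln rho = (CA + CB + Cc - Lt) * ln rho" by simp
    also have "\<dots> = CA * ln rho + CB * ln rho + Cc * ln rho - Lt * ln rho" by (simp add: algebra_simps)
    finally show ?thesis .
  qed
  have tn: "t*n*al \<ge> al"
  proof -
    have "t*n \<ge> 1" using mult_mono[of 1 t 1 n] assms(4,17) by simp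
    thus ?thesis using mult_right_mono[of 1 "t*n" al] a1 by simp
  qed
  have "(Cc * ln rho - Cc) + Phi CA NA + Phi CB NB < H * ln rho - (Cc + Z) - Lt * ln Nw - 2"
    by (rule lin_case2[OF hl pA pB Zb lt _ tn al4]) (use assms(16) in simp)
  thus ?thesis using phic rz unfolding rho_def[symmetric] by simp
qed


context red begin

lemma num_al1: "real al \<ge> 2^20 * (real m)^2"
proof -
  have "al \<ge> 2^20 * m^2" unfolding red_alpha_def by simp
  hence "real al \<ge> real (2^20 * m^2)" by (simp only: of_nat_le_iff)
  thus ?thesis by simp
qed

lemma num_al2: "real al \<ge> (real r)^2"
proof -
  have "al \<ge> r^2" unfolding red_alpha_def by simp
  hence "real al \<ge> real (r^2)" by (simp only: of_nat_le_iff)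
  thus ?thesis by simp
qed

lemma num_r: "real r = 64 * (real n + 1)^2" unfolding red_r_def by simp

lemma Nw_bounds: "1 \<le> real Nw" "real Nw \<le> (real r + real n)^2"
proof -
  have r64: "real r \<ge> 64" unfolding red_r_def by simp
  define R where "R = real (r+n)"
  have R64: "R \<ge> 64" unfolding R_def using r64 by simp
  have e: "2 * real Nw = R * (R - 1)" using star_w_N(1) unfolding R_def .
  have "R * 2 \<le> R * (R - 1)" using R64 by (intro mult_left_mono) auto
  thus "1 \<le> real Nw" using e R64 by linarith
  have "R * (R - 1) \<le> R * R" using R64 by (intro mult_left_mono) auto
  moreover have "R * (R - 1) \<ge> 0" using R64 by simp
  ultimately have "real Nw \<le> R * R" using e by linarith
  thus "real Nw \<le> (real r + real n)^2" unfolding R_def by (simp add: power2_eq_square)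
qed

lemma card_idx: "card {i. i < n \<and> P i} = (\<Sum>i<n. if P i then 1 else 0::nat)"
proof -
  have "(\<Sum>i<n. if P i then 1 else 0::nat) = (\<Sum>i\<in>{..<n}. if i \<in> {i. P i} then 1 else 0)" by simp
  also have "\<dots> = card ({..<n} \<inter> {i. P i})" by (subst sum_if_mem) auto
  finally show ?thesis by (simp add: Int_def conj_commute)
qed

lemma card_AU: "card (A \<inter> Uu) = card {i. i < n \<and> NU i \<in> A}"
proof -
  have "A \<inter> Uu = NU ` {i. i < n \<and> NU i \<in> A}" by auto
  thus ?thesis by (simp add: card_image inj_on_def)
qed

lemma card_AV: "card (A \<inter> Vv) = card {i. i < n \<and> NV i \<in> A}"
proof -
  have "A \<inter> Vv = NV ` {i. i < n \<and> NV i \<in> A}" by auto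
  thus ?thesis by (simp add: card_image inj_on_def)
qed

lemma card_decomp:
  assumes "A \<subseteq> V"
  shows "card A = card (A \<inter> Xn) + card (A \<inter> Yn) + card (A \<inter> Uu) + card (A \<inter> Vv)"
proof -
  have "A = (A \<inter> Xn) \<union> (A \<inter> Yn) \<union> (A \<inter> Uu) \<union> (A \<inter> Vv)" using assms unfolding red_nodes_def by auto
  hence "card A = card ((A \<inter> Xn) \<union> (A \<inter> Yn) \<union> (A \<inter> Uu) \<union> (A \<inter> Vv))" by simp
  also have "\<dots> = card (A \<inter> Xn) + card (A \<inter> Yn) + card (A \<inter> Uu) + card (A \<inter> Vv)"
    by (subst card_Un_disjoint, simp, simp, blast)+ simp
  finally show ?thesis .
qed

lemma ind_real: "real (\<Sum>i<n. if P i then 1 else 0::nat) = (\<Sum>i<n. if P i then 1 else 0::real)"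
  by (induction n) auto

end


lemma titu:
  fixes x y M K :: real
  assumes "M \<ge> 0" "K \<ge> 0" "M = 0 \<Longrightarrow> x = 0" "K = 0 \<Longrightarrow> y = 0"
  shows "(x + y)^2 / (M + K) \<le> x^2 / M + y^2 / K"
proof (cases "M = 0")
  case True thus ?thesis using assms by simp
next
  case M: False
  show ?thesis
  proof (cases "K = 0")
    case True thus ?thesis using assms by simp
  next
    case False
    hence Mp: "M > 0" and Kp: "K > 0" using assms M by auto
    have sq: "0 \<le> (x*K - y*M)^2" by simp
    have "(x^2 * K + y^2 * M) * (M + K) - (x + y)^2 * (M * K) = (x*K - y*M)^2"
      by (simp add: power2_eq_square algebra_simps)
    hence key: "(x + y)^2 * (M * K) \<le> (x^2 * K + y^2 * M) * (M + K)" using sq by linarith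
    have e: "x^2/M + y^2/K = (x^2 * K + y^2 * M) / (M * K)" using Mp Kp by (simp add: field_simps)
    have "(x + y)^2 / (M + K) = ((x + y)^2 * (M * K)) / ((M + K) * (M * K))" using Mp Kp by simp
    also have "\<dots> \<le> ((x^2 * K + y^2 * M) * (M + K)) / ((M + K) * (M * K))"
      by (rule divide_right_mono[OF key]) (use Mp Kp in simp)
    also have "\<dots> = (x^2 * K + y^2 * M) / (M * K)" using Mp Kp by simp
    finally show ?thesis using e by simp
  qed
qed


lemma within_bound:
  fixes x y :: nat and M :: real
  assumes "2 * M \<ge> real (x + y) * (real (x + y) - 1)" "M \<ge> 0" "x * y > 0 \<Longrightarrow> M > 0"
  shows "real (x*y)^2 / M \<le> 3/4 * real (x*y) + 1/4"
proof (cases "x * y = 0")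
  case True
  hence "x = 0 \<or> y = 0" by simp
  thus ?thesis by auto
next
  case False
  hence x: "x \<ge> 1" "y \<ge> 1" by auto
  have Mp: "M > 0" using assms False by simp
  define q where "q = real (x*y)"
  have q0: "q \<ge> 0" unfolding q_def by simp
  show ?thesis
  proof (cases "x + y = 2")
    case True
    hence "x = 1" "y = 1" using x by auto
    hence "M \<ge> 1" using assms(1) by simp
    hence "1 / M \<le> 1" by simp
    thus ?thesis using \<open>x = 1\<close> \<open>y = 1\<close> by simp
  next
    case False
    hence a3: "real x + real y \<ge> 3" using x by linarith
    have q: "4 * (real x * real y) \<le> (real x + real y)^2"
    proof -
      have "0 \<le> (real x - real y)^2" by simp
      moreover have "(real x + real y)^2 - 4 * (real x * real y) = (real x - real y)^2"
        by (simp add: power2_eq_square algebra_simps)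
      ultimately show ?thesis by linarith
    qed
    have "(real x + real y)^2 \<le> (3/2) * ((real x + real y) * (real x + real y - 1))"
    proof -
      define t where "t = real x + real y"
      have "t * 3 \<le> t * t"
        using a3 unfolding t_def by (intro mult_left_mono) auto
      hence "t^2 \<le> (3/2) * (t * (t - 1))" by (simp add: power2_eq_square algebra_simps)
      thus ?thesis unfolding t_def .
    qed
    hence "4 * q \<le> 3 * M" using q assms(1) unfolding q_def by simp
    hence "q \<le> 3/4 * M" by simp
    hence "q * q \<le> q * (3/4 * M)" using q0 by (rule mult_left_mono)
    hence "q^2 / M \<le> 3/4 * q" using Mp by (simp add: power2_eq_square field_simps)
    hence "q^2 / M \<le> 3/4 * q + 1/4" by linarith
    thus ?thesis unfolding q_def .
  qed
qed

lemma qw_ge: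
  fixes xA yA r :: nat
  assumes "xA \<le> r" "yA \<le> r" "\<not> (xA = r \<and> yA = 0)" "\<not> (xA = 0 \<and> yA = r)"
  shows "xA * yA + (r - xA) * (r - yA) \<ge> r"
proof -
  consider "yA = 0" | "xA = 0" | "yA = r" | "xA = r" | "1 \<le> xA \<and> xA < r \<and> 1 \<le> yA \<and> yA < r"
    using assms by linarith
  thus ?thesis
  proof cases
    case 1 thus ?thesis using assms by simp
  next
    case 2 thus ?thesis using assms by simp
  next
    case 3 thus ?thesis using assms by (cases xA) auto
  next
    case 4 thus ?thesis using assms by (cases yA) auto
  next
    case 5
    hence "1 \<le> r - yA" by linarith
    hence "xA * yA \<ge> xA" "(r - xA) * (r - yA) \<ge> r - xA" using 5 by simp_all
    thus ?thesis using 5 by linarith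
  qed
qed


lemma cross_key:
  fixes q a b wA wB r n :: nat
  assumes "q \<le> r * a" "q \<le> r * b" "a + b = 2 * r" "wA + wB = 2 * n"
  shows "q * (r + 2*n) \<le> r * (a*b + a*wB + b*wA)"
proof (cases "a \<le> b")
  case True
  hence "b \<ge> r" using assms by linarith
  have "a*wB + b*wA \<ge> a*wB + a*wA" using True by (simp add: mult_right_mono)
  also have "a*wB + a*wA = a * (2*n)" using assms(4) by (metis add_mult_distrib2 add.commute)
  finally have "a*b + a*wB + b*wA \<ge> a * (b + 2*n)" by (simp add: algebra_simps)
  moreover have "a * (b + 2*n) \<ge> a * (r + 2*n)" using \<open>b \<ge> r\<close> by simp
  ultimately have "a*b + a*wB + b*wA \<ge> a * (r + 2*n)" by linarith
  hence h1: "r * (a * (r + 2*n)) \<le> r * (a*b + a*wB + b*wA)" by simp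
  have "q * (r + 2*n) \<le> (r * a) * (r + 2*n)" using assms(1) by simp
  hence "q * (r + 2*n) \<le> r * (a * (r + 2*n))" by (simp add: mult.assoc)
  thus ?thesis using h1 by (rule order_trans)
next
  case False
  hence "a \<ge> r" using assms by linarith
  have "a*wB + b*wA \<ge> b*wB + b*wA" using False by (simp add: mult_right_mono)
  also have "b*wB + b*wA = b * (2*n)" using assms(4) by (metis add_mult_distrib2 add.commute)
  finally have "a*b + a*wB + b*wA \<ge> b * (a + 2*n)" by (simp add: algebra_simps)
  moreover have "b * (a + 2*n) \<ge> b * (r + 2*n)" using \<open>a \<ge> r\<close> by simp
  ultimately have "a*b + a*wB + b*wA \<ge> b * (r + 2*n)" by linarith
  hence h1: "r * (b * (r + 2*n)) \<le> r * (a*b + a*wB + b*wA)" by simp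
  have "q * (r + 2*n) \<le> (r * b) * (r + 2*n)" using assms(2) by simp
  hence "q * (r + 2*n) \<le> r * (b * (r + 2*n))" by (simp add: mult.assoc)
  thus ?thesis using h1 by (rule order_trans)
qed

lemma cross_bound:
  fixes q a b wA wB r n :: nat and M :: real
  assumes "q \<le> r * a" "q \<le> r * b" "a + b = 2 * r" "wA + wB = 2 * n"
    and "M = real (a*b + a*wB + b*wA)"
  shows "real q ^2 / M \<le> real q * (real r / (real r + 2 * real n))"
proof (cases "q = 0")
  case True thus ?thesis by simp
next
  case False
  have key: "q * (r + 2*n) \<le> r * (a*b + a*wB + b*wA)" by (rule cross_key[OF assms(1-4)])
  have r0: "r > 0" using assms(1) False by (cases r) auto
  have "a*b + a*wB + b*wA > 0"
  proof (rule ccontr)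
    assume "\<not> ?thesis"
    hence z: "a*b + a*wB + b*wA = 0" by linarith
    have "q * (r + 2*n) = 0" using key unfolding z by simp
    thus False using False r0 by simp
  qed
  hence Mp: "M > 0" unfolding assms(5) by (simp only: of_nat_0_less_iff)
  have "real (q * (r + 2*n)) \<le> real (r * (a*b + a*wB + b*wA))" using key by (simp only: of_nat_le_iff)
  hence k2: "real q * (real r + 2 * real n) \<le> real r * M" using assms(5) by simp
  have rp: "real r + 2 * real n > 0" using r0 by simp
  have "real q * real q * (real r + 2 * real n) \<le> real q * (real r * M)"
    using k2 by (simp add: mult.assoc mult_left_mono)
  thus ?thesis using Mp rp by (simp add: power2_eq_square field_simps)
qed


context red begin

lemma part_facts:
  assumes "part A B"
  shows "A \<subseteq> V" "B \<subseteq> V" "A \<inter> B = {}" "\<And>x. x \<in> V \<Longrightarrow> x \<in> B \<longleftrightarrow> x \<notin> A"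
  using assms unfolding part_def by auto

lemma rif: "real (if P then 1 else 0::nat) = (if P then 1 else 0)" by simp

lemma CW_ge_Hv: "finite S \<Longrightarrow> CW S \<ge> n*al*card (S \<inter> Hv)" by (simp add: wsum)
lemma CW_ge_XY: "finite S \<Longrightarrow> CW S \<ge> al*card (S \<inter> XYp)" by (simp add: wsum)

lemma case2:
  assumes p: "part A B" and XA: "Xn \<subseteq> A" and YB: "Yn \<subseteq> B" and i0: "i0 < n"
    and both: "(NU i0 \<in> A \<and> NV i0 \<in> A) \<or> (NU i0 \<in> B \<and> NV i0 \<in> B)" and nm: "n \<le> m"
  shows "\<exists>rho>0. PhiSum A B < Hval rho"
proof -
  note pf = part_facts[OF p]
  have fA: "finite A" "finite B" using part_fin[OF p] by auto
  define TA where "TA = {i. i < n \<and> NU i \<in> A \<and> NV i \<in> A}"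
  define TB where "TB = {i. i < n \<and> NU i \<in> B \<and> NV i \<in> B}"
  have uV: "NU i \<in> V" "NV i \<in> V" if "i < n" for i using that unfolding red_nodes_def by auto
  have cA: "real (card A) = real r + (\<Sum>i<n. (if NU i \<in> A then 1 else 0) + (if NV i \<in> A then 1 else 0::real))"
  proof -
    have "card (A \<inter> Xn) = r" using XA card_Xn by (simp add: Int_absorb1)
    moreover have "A \<inter> Yn = {}" using YB pf(3) by auto
    ultimately have "card A = r + card (A \<inter> Uu) + card (A \<inter> Vv)" using card_decomp[OF pf(1)] by simp
    thus ?thesis unfolding card_AU card_AV card_idx by (simp add: sum.distrib of_nat_sum rif)
  qed
  have cB: "real (card B) = real r + (\<Sum>i<n. (if NU i \<in> B then 1 else 0) + (if NV i \<in> B then 1 else 0::real))"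
  proof -
    have "card (B \<inter> Yn) = r" using YB card_Yn by (simp add: Int_absorb1)
    moreover have "B \<inter> Xn = {}" using XA pf(3) by auto
    ultimately have "card B = r + card (B \<inter> Uu) + card (B \<inter> Vv)" using card_decomp[OF pf(2)] by simp
    thus ?thesis unfolding card_AU card_AV card_idx by (simp add: sum.distrib of_nat_sum rif)
  qed
  have tA: "real (card TA) = (\<Sum>i<n. if NU i \<in> A \<and> NV i \<in> A then 1 else 0::real)"
    unfolding TA_def card_idx by (simp add: of_nat_sum rif)
  have tB: "real (card TB) = (\<Sum>i<n. if NU i \<in> B \<and> NV i \<in> B then 1 else 0::real)"
    unfolding TB_def card_idx by (simp add: of_nat_sum rif)
  have perA: "(\<Sum>i<n. (if NU i \<in> A then 1 else 0) + (if NV i \<in> A then 1 else 0::real))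
      = (\<Sum>i<n. 1 + (if NU i \<in> A \<and> NV i \<in> A then 1 else 0) - (if NU i \<in> B \<and> NV i \<in> B then 1 else 0::real))"
  proof (rule sum.cong)
    fix i assume "i \<in> {..<n}"
    hence "NU i \<in> B \<longleftrightarrow> NU i \<notin> A" "NV i \<in> B \<longleftrightarrow> NV i \<notin> A" using pf(4) uV by auto
    thus "(if NU i \<in> A then 1 else 0) + (if NV i \<in> A then 1 else 0::real)
       = 1 + (if NU i \<in> A \<and> NV i \<in> A then 1 else 0) - (if NU i \<in> B \<and> NV i \<in> B then 1 else 0::real)" by auto
  qed simp
  have perB: "(\<Sum>i<n. (if NU i \<in> B then 1 else 0) + (if NV i \<in> B then 1 else 0::real))
      = (\<Sum>i<n. 1 - (if NU i \<in> A \<and> NV i \<in> A then 1 else 0) + (if NU i \<in> B \<and> NV i \<in> B then 1 else 0::real))"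
  proof (rule sum.cong)
    fix i assume "i \<in> {..<n}"
    hence "NU i \<in> B \<longleftrightarrow> NU i \<notin> A" "NV i \<in> B \<longleftrightarrow> NV i \<notin> A" using pf(4) uV by auto
    thus "(if NU i \<in> B then 1 else 0) + (if NV i \<in> B then 1 else 0::real)
       = 1 - (if NU i \<in> A \<and> NV i \<in> A then 1 else 0) + (if NU i \<in> B \<and> NV i \<in> B then 1 else 0::real)" by auto
  qed simp
  define d where "d = real (card TA) - real (card TB)"
  have cA2: "real (card A) = real r + real n + d"
    unfolding cA perA d_def tA tB by (simp add: sum.distrib sum_subtractf)
  have cB2: "real (card B) = real r + real n - d"
    unfolding cB perB d_def tA tB by (simp add: sum.distrib sum_subtractf)
  have Nc: "real (card (upairs A B)) = (real r + real n)^2 - d^2"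
  proof -
    have "real (card (upairs A B)) = real (card A) * real (card B)" using card_upairs_disj[OF fA pf(3)] by simp
    also have "\<dots> = ((real r + real n) + d) * ((real r + real n) - d)" using cA2 cB2 by simp
    also have "\<dots> = (real r + real n)^2 - d^2" by (simp add: power2_eq_square algebra_simps)
    finally show ?thesis .
  qed
  have TAB: "TA \<inter> TB = {}" unfolding TA_def TB_def using pf(3) by auto
  have tle: "card TA + card TB \<le> n"
  proof -
    have "card TA + card TB = card (TA \<union> TB)" using TAB by (simp add: card_Un_disjoint TA_def TB_def)
    also have "\<dots> \<le> card {..<n}" by (rule card_mono) (auto simp: TA_def TB_def)
    finally show ?thesis by simp
  qed
  define t where "t = real (card TA + card TB)"
  have t1: "t \<ge> 1"
  proof -
    have "i0 \<in> TA \<or> i0 \<in> TB" using both i0 unfolding TA_def TB_def by auto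
    hence "TA \<noteq> {} \<or> TB \<noteq> {}" by auto
    hence "card TA + card TB \<ge> 1" by (auto simp: TA_def TB_def card_gt_0_iff Suc_le_eq)
    thus ?thesis unfolding t_def by simp
  qed
  have tn: "t \<le> real n" unfolding t_def using tle by simp
  have d2: "d^2 \<le> t * real n"
  proof -
    have "d^2 \<le> t^2" unfolding d_def t_def by (simp add: power2_eq_square algebra_simps)
    also have "t^2 \<le> t * real n" using tn t1 by (simp add: power2_eq_square mult_left_mono)
    finally show ?thesis .
  qed
  have injH: "inj_on (\<lambda>i. {NU i, NV i}) T" for T by (auto simp: inj_on_def doubleton_eq_iff)
  have CA: "CW (upairs A A) \<ge> n*al*card TA"
  proof -
    have "(\<lambda>i. {NU i, NV i}) ` TA \<subseteq> upairs A A \<inter> Hv"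
      unfolding TA_def Hv_def upairs_def by auto
    hence "card TA \<le> card (upairs A A \<inter> Hv)"
      using card_mono[of "upairs A A \<inter> Hv"] card_image[OF injH[of TA]] fA by (metis finite_Int finite_upairs)
    hence "n*al*card TA \<le> n*al*card (upairs A A \<inter> Hv)" by simp
    also have "\<dots> \<le> CW (upairs A A)" by (rule CW_ge_Hv) (simp add: finite_upairs fA)
    finally show ?thesis .
  qed
  have CB: "CW (upairs B B) \<ge> n*al*card TB"
  proof -
    have "(\<lambda>i. {NU i, NV i}) ` TB \<subseteq> upairs B B \<inter> Hv"
      unfolding TB_def Hv_def upairs_def by auto
    hence "card TB \<le> card (upairs B B \<inter> Hv)"
      using card_mono[of "upairs B B \<inter> Hv"] card_image[OF injH[of TB]] fA by (metis finite_Int finite_upairs)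
    hence "n*al*card TB \<le> n*al*card (upairs B B \<inter> Hv)" by simp
    also have "\<dots> \<le> CW (upairs B B)" by (rule CW_ge_Hv) (simp add: finite_upairs fA)
    finally show ?thesis .
  qed
  have XYAB: "XYp \<subseteq> upairs A B" unfolding XYp_def using upairs_mono[OF XA YB] .
  have Cc: "CW (upairs A B) \<ge> al*(r*r)"
  proof -
    have "upairs A B \<inter> XYp = XYp" using XYAB by auto
    thus ?thesis using CW_ge_XY[of "upairs A B"] fA by (simp add: finite_upairs card_XYp)
  qed
  have Ncr: "card (upairs A B) \<ge> r*r"
    using card_mono[OF _ XYAB] card_XYp fA by (simp add: finite_upairs)
  have NA: "2 * real (card (upairs A A)) \<ge> real r * (real r - 1)"
  proof -
    have "card (upairs Xn Xn) \<le> card (upairs A A)" using upairs_mono[OF XA XA] fA by (intro card_mono) (auto simp: finite_upairs)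
    thus ?thesis using card_upairs_self_real[of Xn] card_Xn by simp
  qed
  have NB: "2 * real (card (upairs B B)) \<ge> real r * (real r - 1)"
  proof -
    have "card (upairs Yn Yn) \<le> card (upairs B B)" using upairs_mono[OF YB YB] fA by (intro card_mono) (auto simp: finite_upairs)
    thus ?thesis using card_upairs_self_real[of Yn] card_Yn by simp
  qed
  have bs: "real (CW (upairs A A)) + real (CW (upairs B B)) + real (CW (upairs A B))
      = ((real r)^2 + (real n)^2) * real al + real Ltot"
  proof -
    have "CW (upairs A A) + CW (upairs A B) + CW (upairs B B) = Ltot + n*al*n + al*(r*r)" by (rule block_sum[OF p])
    hence "real (CW (upairs A A) + CW (upairs A B) + CW (upairs B B)) = real (Ltot + n*al*n + al*(r*r))" by simp
    thus ?thesis by (simp add: power2_eq_square algebra_simps)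
  qed
  have n1: "real n \<ge> 1" using i0 by simp
  have CAB: "real (CW (upairs A A)) + real (CW (upairs B B)) \<ge> t * real n * real al"
  proof -
    have "real (n*al*card TA) + real (n*al*card TB) \<le> real (CW (upairs A A)) + real (CW (upairs B B))"
      using CA CB by (simp only: of_nat_le_iff add_mono)
    thus ?thesis unfolding t_def by (simp add: algebra_simps)
  qed
  have fin: "Phi (real (CW (upairs A B))) (real (card (upairs A B))) + Phi (real (CW (upairs A A))) (real (card (upairs A A)))
      + Phi (real (CW (upairs B B))) (real (card (upairs B B)))
      < ((real r)^2 + (real n)^2) * real al * ln (real (CW (upairs A B)) / real (card (upairs A B)))
        - (real (CW (upairs A B)) / real (card (upairs A B))) * (real r + real n)^2 - real Ltot * ln (real Nw) - 2"
  proof (rule case2_final[OF num_al1 num_al2 num_r n1 _ _ _ Nw_bounds refl bs])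
    show "real m \<ge> 0" by simp
    show "0 \<le> real Ltot" by simp
    show "real Ltot \<le> 2 * real m" using Ltot_le by simp
    have "real (al*(r*r)) \<le> real (CW (upairs A B))" using Cc by (simp only: of_nat_le_iff)
    thus "real (CW (upairs A B)) \<ge> (real r)^2 * real al" by (simp add: power2_eq_square algebra_simps)
    have "real (r*r) \<le> real (card (upairs A B))" using Ncr by (simp only: of_nat_le_iff)
    thus "real (card (upairs A B)) \<ge> (real r)^2" by (simp add: power2_eq_square)
    show "real (card (upairs A B)) \<le> (real r + real n)^2" using Nc by simp
    show "(real r + real n)^2 - real (card (upairs A B)) \<le> t * real n" using Nc d2 by simp
    show "real (CW (upairs A A)) + real (CW (upairs B B)) \<ge> t * real n * real al" by (rule CAB)
    show "t \<ge> 1" by (rule t1)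
    show "2 * real (card (upairs A A)) \<ge> real r * (real r - 1)" by (rule NA)
    show "2 * real (card (upairs B B)) \<ge> real r * (real r - 1)" by (rule NB)
    show "real (CW (upairs A A)) \<ge> 0" "real (CW (upairs B B)) \<ge> 0" by simp_all
  qed
  define rho where "rho = real (CW (upairs A B)) / real (card (upairs A B))"
  have rp: "rho > 0"
  proof -
    have r0: "r > 0" unfolding red_r_def by simp
    have "al \<ge> r^2" unfolding red_alpha_def by simp
    hence a0: "al > 0" using r0 by (metis gr0I le_0_eq power_not_zero not_gr_zero)
    have "al*(r*r) > 0" using r0 a0 by simp
    hence "CW (upairs A B) > 0" using Cc by linarith
    moreover have "card (upairs A B) > 0" using Ncr r0 by (metis gr0I le_0_eq mult_is_0 not_gr_zero)
    ultimately show ?thesis unfolding rho_def by simp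
  qed
  have "PhiSum A B < Hval rho"
    using fin unfolding PhiSum_def Hval_def rho_def[symmetric]
    by (simp add: power2_eq_square algebra_simps)
  thus ?thesis using rp by blast
qed

end


lemma Phi_quad:
  fixes C N a :: real
  assumes "C \<ge> 0" "N \<ge> 0" "C > 0 \<Longrightarrow> N > 0" "a > 0"
  shows "Phi C N \<le> C * ln a + C^2 / (a * N) - 2 * C"
proof (cases "C = 0")
  case True thus ?thesis by (simp add: Phi_def)
next
  case False
  hence Cp: "C > 0" using assms by simp
  hence Np: "N > 0" using assms by simp
  have y: "C / (a * N) > 0" using Cp Np assms(4) by simp
  have "ln (C / N) = ln a + ln (C / (a * N))" using Cp Np assms(4) by (simp add: ln_div ln_mult)
  also have "\<dots> \<le> ln a + (C / (a * N) - 1)" using ln_le_minus_one[OF y] by simp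
  finally have "C * ln (C / N) \<le> C * (ln a + (C / (a * N) - 1))" using Cp by (simp add: mult_left_mono)
  also have "\<dots> = C * ln a + C^2 / (a * N) - C" by (simp add: power2_eq_square algebra_simps)
  finally show ?thesis using False by (simp add: Phi_def)
qed

lemma uvpart:
  fixes p K :: nat and L B nal :: real
  assumes "K \<ge> p^2" "0 \<le> L" "L \<le> B" "L > 0 \<Longrightarrow> K \<ge> 1" "nal \<ge> 0"
  shows "(nal * p + L)^2 / K \<le> (nal + B)^2"
proof (cases "p = 0")
  case True
  show ?thesis
  proof (cases "L = 0")
    case True thus ?thesis using \<open>p = 0\<close> by simp
  next
    case False
    hence "K \<ge> 1" using assms by simp
    hence "real K \<ge> 1" by simp
    hence "L^2 / K \<le> L^2 / 1" by (intro divide_left_mono) auto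
    also have "L^2 \<le> (nal + B)^2" using assms by (intro power_mono) auto
    finally show ?thesis using \<open>p = 0\<close> by simp
  qed
next
  case False
  hence p1: "real p \<ge> 1" by simp
  have Kp: "real K \<ge> (real p)^2" using assms(1) by (metis of_nat_le_iff of_nat_power)
  have pp: "(real p)^2 > 0" using p1 by simp
  have "(nal * p + L)^2 / K \<le> (nal * p + L)^2 / (real p)^2"
  proof -
    have Kpos: "real K > 0" using Kp pp by linarith
    show ?thesis using Kp pp Kpos by (intro divide_left_mono) auto
  qed
  also have "\<dots> = (nal + L / p)^2" using p1 by (simp add: power2_eq_square field_simps)
  also have "\<dots> \<le> (nal + B)^2"
  proof -
    have "L / p \<le> L" using p1 assms(2) by (simp add: divide_le_eq mult_le_cancel_left1)
    thus ?thesis using assms by (intro power_mono) auto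
  qed
  finally show ?thesis .
qed


fun gidx :: "gnode \<Rightarrow> nat" where
  "gidx (NU i) = i" | "gidx (NV i) = i" | "gidx (NX i) = i" | "gidx (NY i) = i"

context red begin

lemma matching:
  assumes "finite (upairs S T)"
  shows "card (upairs S T \<inter> Hv)^2 \<le> card (upairs S T)"
proof -
  define I where "I = {i. i < n \<and> {NU i, NV i} \<in> upairs S T}"
  have eqI: "upairs S T \<inter> Hv = (\<lambda>i. {NU i, NV i}) ` I" unfolding I_def Hv_def by auto
  have cI: "card (upairs S T \<inter> Hv) = card I"
    unfolding eqI by (rule card_image) (auto simp: inj_on_def doubleton_eq_iff)
  define sS where "sS i = (if NU i \<in> S \<and> NV i \<in> T then NU i else NV i)" for i
  define sT where "sT i = (if NU i \<in> S \<and> NV i \<in> T then NV i else NU i)" for i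
  have mem: "sS i \<in> S \<and> sT i \<in> T" if "i \<in> I" for i
  proof -
    have "{NU i, NV i} \<in> upairs S T" using that unfolding I_def by simp
    then obtain a b where ab: "{NU i, NV i} = {a,b}" "a \<in> S" "b \<in> T" unfolding upairs_def by blast
    thus ?thesis unfolding sS_def sT_def by (auto simp: doubleton_eq_iff)
  qed
  have gS: "gidx (sS i) = i" and gT: "gidx (sT i) = i" and neq: "sS i \<noteq> sT i" for i
    unfolding sS_def sT_def by auto
  define f where "f p = {sS (fst p), sT (snd p)}" for p
  have img: "f ` (I \<times> I) \<subseteq> upairs S T"
  proof
    fix x assume "x \<in> f ` (I \<times> I)"
    then obtain i j where ij: "i \<in> I" "j \<in> I" "x = {sS i, sT j}" unfolding f_def by auto
    have "sS i \<noteq> sT j"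
    proof
      assume h: "sS i = sT j"
      hence "i = j" using gS[of i] gT[of j] by simp
      thus False using h neq by simp
    qed
    thus "x \<in> upairs S T" using ij mem unfolding upairs_def by blast
  qed
  have inj: "inj_on f (I \<times> I)"
  proof (rule inj_onI)
    fix p q assume "p \<in> I \<times> I" "q \<in> I \<times> I" "f p = f q"
    hence e: "{sS (fst p), sT (snd p)} = {sS (fst q), sT (snd q)}" unfolding f_def by simp
    show "p = q"
    proof (cases "sS (fst p) = sS (fst q)")
      case True
      hence "sT (snd p) = sT (snd q)" using e by (auto simp: doubleton_eq_iff)
      hence "snd p = snd q" using gT by metis
      moreover have "fst p = fst q" using True gS by metis
      ultimately show ?thesis by (simp add: prod_eq_iff)
    next
      case False
      hence h: "sS (fst p) = sT (snd q)" "sT (snd p) = sS (fst q)" using e by (auto simp: doubleton_eq_iff)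
      hence "fst p = snd q" using gS gT by metis
      hence "sS (fst p) = sT (fst p)" using h(1) by simp
      thus ?thesis using neq by simp
    qed
  qed
  have fI: "finite I" unfolding I_def by simp
  have "card (I \<times> I) \<le> card (upairs S T)"
    using card_inj_on_le[OF inj img assms] .
  thus ?thesis using cI by (simp add: card_cartesian_product power2_eq_square)
qed

end


context red begin

lemma blockdec:
  assumes "S \<subseteq> V" "T \<subseteq> V" "finite S" "finite T"
  shows "real (CW (upairs S T))^2 / real (card (upairs S T))
     \<le> (real al)^2 * (real (card (upairs S T \<inter> XYp))^2 / real (card (upairs S T - upairs (S \<inter> W) (T \<inter> W))))
        + (real n * real al + 2 * real m)^2"
proof -
  define E where "E = upairs S T"
  define E2 where "E2 = upairs (S \<inter> W) (T \<inter> W)"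
  define E1 where "E1 = E - E2"
  define q where "q = card (E \<inter> XYp)"
  have fE: "finite E" unfolding E_def using assms by (simp add: finite_upairs)
  have E2E: "E2 \<subseteq> E" unfolding E2_def E_def by (rule upairs_mono) auto
  have fE2: "finite E2" using fE E2E finite_subset by blast
  have fE1: "finite E1" unfolding E1_def using fE by simp
  have EW: "E \<inter> upairs W W \<subseteq> E2" unfolding E_def E2_def using upairs_inter_cross[of S T W W] by auto
  have E2W: "E2 \<subseteq> upairs W W" unfolding E2_def by (rule upairs_mono) auto
  have EV: "E \<subseteq> upairs V V" unfolding E_def using assms by (intro upairs_mono) auto
  have Eu: "E = E1 \<union> E2" "E1 \<inter> E2 = {}" unfolding E1_def using E2E by auto
  have CWs: "CW E = CW E1 + CW E2" using Eu fE1 fE2 CW_union by metis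
  have CW1: "CW E1 = al * q"
  proof -
    have "(\<Sum>e\<in>E1. Lw e) = 0"
    proof (rule sum.neutral, rule ballI)
      fix e assume e: "e \<in> E1"
      hence "e \<in> upairs V V" "e \<notin> upairs W W" using EV EW unfolding E1_def by auto
      thus "Lw e = 0" by (rule Lw_out)
    qed
    moreover have "E1 \<inter> Hv = {}" using Hv_subW EW unfolding E1_def by auto
    moreover have "E1 \<inter> XYp = E \<inter> XYp" using XYp_W E2W unfolding E1_def by auto
    ultimately show ?thesis using fE1 by (simp add: wsum q_def)
  qed
  define L where "L = (\<Sum>e\<in>E2. Lw e)"
  define p where "p = card (E2 \<inter> Hv)"
  have CW2: "CW E2 = L + n*al*p"
  proof -
    have "E2 \<inter> XYp = {}" using XYp_W E2W by auto
    thus ?thesis using fE2 by (simp add: wsum L_def p_def)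
  qed
  have Lle: "L \<le> 2*m" unfolding L_def by (rule sum_Lw_le[OF fE2])
  have cE: "card E = card E1 + card E2" using Eu fE1 fE2 card_Un_disjoint by metis
  have mt: "p^2 \<le> card E2" unfolding p_def E2_def
    by (rule matching) (use fE2 in \<open>simp add: E2_def\<close>)
  have L1: "L > 0 \<Longrightarrow> card E2 \<ge> 1"
  proof -
    assume "L > 0"
    hence "E2 \<noteq> {}" unfolding L_def by auto
    thus "card E2 \<ge> 1" using fE2 by (simp add: Suc_le_eq card_gt_0_iff)
  qed
  have M0: "card E1 = 0 \<Longrightarrow> q = 0"
  proof -
    assume "card E1 = 0"
    hence "E1 = {}" using fE1 by simp
    moreover have "E \<inter> XYp \<subseteq> E1" using XYp_W E2W unfolding E1_def by auto
    ultimately show "q = 0" unfolding q_def by auto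
  qed
  have K0: "card E2 = 0 \<Longrightarrow> L = 0 \<and> p = 0"
  proof -
    assume "card E2 = 0"
    hence "E2 = {}" using fE2 by simp
    thus "L = 0 \<and> p = 0" unfolding L_def p_def by simp
  qed
  have uv: "(real n * real al * real p + real L)^2 / real (card E2) \<le> (real n * real al + 2 * real m)^2"
  proof (rule uvpart)
    show "card E2 \<ge> p^2" by (rule mt)
    show "0 \<le> real L" by simp
    show "real L \<le> 2 * real m" using Lle by simp
    show "real L > 0 \<Longrightarrow> card E2 \<ge> 1" using L1 by simp
    show "real n * real al \<ge> 0" by simp
  qed
  have "real (CW E)^2 / real (card E) = (real al * real q + (real n * real al * real p + real L))^2 / (real (card E1) + real (card E2))"
    using CWs CW1 CW2 cE by (simp add: algebra_simps)
  also have "\<dots> \<le> (real al * real q)^2 / real (card E1) + (real n * real al * real p + real L)^2 / real (card E2)"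
    by (rule titu) (use M0 K0 in auto)
  also have "\<dots> \<le> (real al * real q)^2 / real (card E1) + (real n * real al + 2 * real m)^2"
    using uv by simp
  finally show ?thesis unfolding E_def[symmetric] E2_def[symmetric] E1_def[symmetric] q_def[symmetric]
    by (simp add: power_mult_distrib)
qed

end


context red begin

lemma card_split: "A \<union> B \<supseteq> S \<Longrightarrow> A \<inter> B = {} \<Longrightarrow> finite S \<Longrightarrow> card (A \<inter> S) + card (B \<inter> S) = card S"
proof -
  assume h: "A \<union> B \<supseteq> S" "A \<inter> B = {}" "finite S"
  have "S = (A \<inter> S) \<union> (B \<inter> S)" using h by auto
  moreover have "(A \<inter> S) \<inter> (B \<inter> S) = {}" using h by auto
  ultimately show ?thesis using h(3) by (metis card_Un_disjoint finite_Int inf_commute)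
qed

lemma card_W: "card W = 2*n" by (subst card_Un_disjoint) (auto simp: card_Uu card_Vv)

lemma case1_q:
  assumes p: "part A B" and ns: "\<not> ((Xn \<subseteq> A \<and> Yn \<subseteq> B) \<or> (Xn \<subseteq> B \<and> Yn \<subseteq> A))"
  shows "real (card (upairs A A \<inter> XYp))^2 / real (card (upairs A A - upairs (A \<inter> W) (A \<inter> W)))
       + real (card (upairs A B \<inter> XYp))^2 / real (card (upairs A B - upairs (A \<inter> W) (B \<inter> W)))
       + real (card (upairs B B \<inter> XYp))^2 / real (card (upairs B B - upairs (B \<inter> W) (B \<inter> W)))
       \<le> (real r - real n)^2 - 3 * (real n)^2 - 2"
proof -
  note pf = part_facts[OF p]
  have fA: "finite A" "finite B" using part_fin[OF p] by auto
  have AB: "A \<union> B = V" using p unfolding part_def by auto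
  define xA where "xA = card (A \<inter> Xn)"
  define yA where "yA = card (A \<inter> Yn)"
  define xB where "xB = card (B \<inter> Xn)"
  define yB where "yB = card (B \<inter> Yn)"
  define wA where "wA = card (A \<inter> W)"
  define wB where "wB = card (B \<inter> W)"
  have sx: "xA + xB = r" unfolding xA_def xB_def using card_split[of Xn A B] AB pf(3) card_Xn unfolding red_nodes_def by auto
  have sy: "yA + yB = r" unfolding yA_def yB_def using card_split[of Yn A B] AB pf(3) card_Yn unfolding red_nodes_def by auto
  have sw: "wA + wB = 2*n" unfolding wA_def wB_def using card_split[of W A B] AB pf(3) card_W unfolding red_nodes_def by auto
  have cWs: "card (S \<inter> W) = card (S \<inter> Uu) + card (S \<inter> Vv)" if "finite S" for S
  proof -
    have "S \<inter> W = (S \<inter> Uu) \<union> (S \<inter> Vv)" by auto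
    thus ?thesis using that by (metis card_Un_disjoint disj(3) finite_Int inf_assoc inf_bot_right inf_left_commute)
  qed
  have cA: "card A = xA + yA + wA" using card_decomp[OF pf(1)] cWs[OF fA(1)] unfolding xA_def yA_def wA_def by simp
  have cB: "card B = xB + yB + wB" using card_decomp[OF pf(2)] cWs[OF fA(2)] unfolding xB_def yB_def wB_def by simp
  have qAA: "card (upairs A A \<inter> XYp) = xA * yA"
    unfolding XYp_def upairs_inter_self xA_def yA_def by (rule card_upairs_disj) (use fA in auto)
  have qBB: "card (upairs B B \<inter> XYp) = xB * yB"
    unfolding XYp_def upairs_inter_self xB_def yB_def by (rule card_upairs_disj) (use fA in auto)
  have qAB: "card (upairs A B \<inter> XYp) = xA * yB + yA * xB"
  proof -
    have "card (upairs A B \<inter> XYp) = card (upairs (A \<inter> Xn) (B \<inter> Yn) \<union> upairs (A \<inter> Yn) (B \<inter> Xn))"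
      unfolding XYp_def upairs_inter_cross ..
    also have "\<dots> = card (upairs (A \<inter> Xn) (B \<inter> Yn)) + card (upairs (A \<inter> Yn) (B \<inter> Xn))"
      by (rule card_Un_disjoint) (use fA upairs_cross_disj[OF pf(3) disj(1)] in \<open>auto simp: finite_upairs\<close>)
    also have "\<dots> = xA * yB + yA * xB" unfolding xA_def yA_def xB_def yB_def
      using fA pf(3) by (subst card_upairs_disj, auto)+
    finally show ?thesis .
  qed
  define MA where "MA = card (upairs A A - upairs (A \<inter> W) (A \<inter> W))"
  define MB where "MB = card (upairs B B - upairs (B \<inter> W) (B \<inter> W))"
  define MC where "MC = card (upairs A B - upairs (A \<inter> W) (B \<inter> W))"
  have Mw: "2 * real (card (upairs S S - upairs (S \<inter> W) (S \<inter> W))) \<ge> real (card (S \<inter> Xn) + card (S \<inter> Yn)) * (real (card (S \<inter> Xn) + card (S \<inter> Yn)) - 1)"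
    if "finite S" for S
  proof -
    have sub: "upairs (S \<inter> XY) (S \<inter> XY) \<subseteq> upairs S S - upairs (S \<inter> W) (S \<inter> W)"
      unfolding upairs_def by (auto simp: doubleton_eq_iff)
    have "card (upairs (S \<inter> XY) (S \<inter> XY)) \<le> card (upairs S S - upairs (S \<inter> W) (S \<inter> W))"
      by (rule card_mono[OF _ sub]) (use that in \<open>simp add: finite_upairs\<close>)
    moreover have "card (S \<inter> XY) = card (S \<inter> Xn) + card (S \<inter> Yn)"
    proof -
      have "S \<inter> XY = (S \<inter> Xn) \<union> (S \<inter> Yn)" by auto
      thus ?thesis using that by (metis card_Un_disjoint disj(1) finite_Int inf_assoc inf_bot_right inf_left_commute)
    qed
    ultimately show ?thesis using card_upairs_self_real[of "S \<inter> XY"] that by simp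
  qed
  have MAb: "2 * real MA \<ge> real (xA + yA) * (real (xA + yA) - 1)" using Mw[OF fA(1)] unfolding MA_def xA_def yA_def .
  have MBb: "2 * real MB \<ge> real (xB + yB) * (real (xB + yB) - 1)" using Mw[OF fA(2)] unfolding MB_def xB_def yB_def .
  have MCe: "MC = (xA + yA) * (xB + yB) + (xA + yA) * wB + (xB + yB) * wA"
  proof -
    have sub: "upairs (A \<inter> W) (B \<inter> W) \<subseteq> upairs A B" by (rule upairs_mono) auto
    have "MC = card (upairs A B) - card (upairs (A \<inter> W) (B \<inter> W))"
      unfolding MC_def by (rule card_Diff_subset) (use fA in \<open>auto simp: finite_upairs sub finite_subset\<close>)
    also have "card (upairs A B) = card A * card B" by (rule card_upairs_disj[OF fA pf(3)])
    also have "card (upairs (A \<inter> W) (B \<inter> W)) = wA * wB"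
      unfolding wA_def wB_def by (rule card_upairs_disj) (use fA pf(3) in auto)
    finally show ?thesis using cA cB by (simp add: algebra_simps)
  qed
  have Mpos: "MA > 0" if "xA * yA > 0"
  proof -
    have "real (xA + yA) \<ge> 2" using that by simp
    hence "real (xA + yA) * (real (xA + yA) - 1) \<ge> 2 * 1" by (intro mult_mono) auto
    thus ?thesis using MAb by simp
  qed
  have MposB: "MB > 0" if "xB * yB > 0"
  proof -
    have "real (xB + yB) \<ge> 2" using that by simp
    hence "real (xB + yB) * (real (xB + yB) - 1) \<ge> 2 * 1" by (intro mult_mono) auto
    thus ?thesis using MBb by simp
  qed
  have wA': "real (xA*yA)^2 / real MA \<le> 3/4 * real (xA*yA) + 1/4"
    by (rule within_bound[OF MAb]) (use Mpos in auto)
  have wB': "real (xB*yB)^2 / real MB \<le> 3/4 * real (xB*yB) + 1/4"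
    by (rule within_bound[OF MBb]) (use MposB in auto)
  have xle: "xA \<le> r" "yA \<le> r" "xB \<le> r" "yB \<le> r" using sx sy by auto
  have cr: "real (xA * yB + yA * xB)^2 / real MC \<le> real (xA * yB + yA * xB) * (real r / (real r + 2 * real n))"
  proof (rule cross_bound[where a="xA+yA" and b="xB+yB" and wA=wA and wB=wB])
    show "xA * yB + yA * xB \<le> r * (xA + yA)" using xle by (simp add: algebra_simps add_mono mult_right_mono mult.commute)
    have h1: "xA * yB \<le> r * yB" by (rule mult_right_mono[OF xle(1)]) simp
    have h2: "yA * xB \<le> r * xB" by (rule mult_right_mono[OF xle(2)]) simp
    have "r * (xB + yB) = r * yB + r * xB" by (simp add: algebra_simps)
    thus "xA * yB + yA * xB \<le> r * (xB + yB)" using h1 h2 by linarith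
    show "xA + yA + (xB + yB) = 2 * r" using sx sy by simp
    show "wA + wB = 2 * n" by (rule sw)
    show "real MC = real ((xA + yA) * (xB + yB) + (xA + yA) * wB + (xB + yB) * wA)" using MCe by simp
  qed
  have nsep: "\<not> (xA = r \<and> yA = 0)" "\<not> (xA = 0 \<and> yA = r)"
  proof -
    have fX: "finite Xn" "finite Yn" by auto
    have XV: "Xn \<subseteq> A \<union> B" "Yn \<subseteq> A \<union> B" using AB unfolding red_nodes_def by auto
    show "\<not> (xA = r \<and> yA = 0)"
    proof
      assume h: "xA = r \<and> yA = 0"
      have "A \<inter> Xn = Xn" using h card_subset_eq[of Xn "A \<inter> Xn"] card_Xn unfolding xA_def by auto
      moreover have "A \<inter> Yn = {}" using h fA unfolding yA_def by simp
      ultimately have "Xn \<subseteq> A \<and> Yn \<subseteq> B" using XV by blast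
      thus False using ns by blast
    qed
    show "\<not> (xA = 0 \<and> yA = r)"
    proof
      assume h: "xA = 0 \<and> yA = r"
      have "A \<inter> Yn = Yn" using h card_subset_eq[of Yn "A \<inter> Yn"] card_Yn unfolding yA_def by auto
      moreover have "A \<inter> Xn = {}" using h fA unfolding xA_def by simp
      ultimately have "Xn \<subseteq> B \<and> Yn \<subseteq> A" using XV by blast
      thus False using ns by blast
    qed
  qed
  have qw: "xA * yA + xB * yB \<ge> r"
  proof -
    have "xB = r - xA" "yB = r - yA" using sx sy by auto
    thus ?thesis using qw_ge[OF xle(1,2) nsep] by simp
  qed
  have qtot: "real (xA * yB + yA * xB) = (real r)^2 - real (xA * yA + xB * yB)"
  proof -
    have "(xA + xB) * (yA + yB) = r * r" using sx sy by simp
    hence "real ((xA + xB) * (yA + yB)) = real r * real r" by simp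
    thus ?thesis by (simp add: power2_eq_square algebra_simps)
  qed
  have n1: "((real r)^2 - real (xA * yA + xB * yB)) * (real r / (real r + 2 * real n)) + 3/4 * real (xA * yA + xB * yB) + 1/2
      \<le> (real r - real n)^2 - 3 * (real n)^2 - 2"
  proof (rule num1[OF num_r])
    show "real n \<ge> 0" by simp
    have "real r \<le> real (xA * yA + xB * yB)" using qw by (simp only: of_nat_le_iff)
    thus "real r \<le> real (xA * yA + xB * yB)" .
  qed
  have "real (card (upairs A A \<inter> XYp))^2 / real (card (upairs A A - upairs (A \<inter> W) (A \<inter> W)))
       + real (card (upairs A B \<inter> XYp))^2 / real (card (upairs A B - upairs (A \<inter> W) (B \<inter> W)))
       + real (card (upairs B B \<inter> XYp))^2 / real (card (upairs B B - upairs (B \<inter> W) (B \<inter> W)))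
     = real (xA*yA)^2 / real MA + real (xA * yB + yA * xB)^2 / real MC + real (xB*yB)^2 / real MB"
    unfolding qAA qAB qBB MA_def MB_def MC_def by simp
  also have "\<dots> \<le> (3/4 * real (xA*yA) + 1/4) + real (xA * yB + yA * xB) * (real r / (real r + 2 * real n)) + (3/4 * real (xB*yB) + 1/4)"
    using wA' wB' cr by linarith
  also have "\<dots> = ((real r)^2 - real (xA * yA + xB * yB)) * (real r / (real r + 2 * real n)) + 3/4 * real (xA * yA + xB * yB) + 1/2"
    unfolding qtot by (simp add: algebra_simps)
  also have "\<dots> \<le> (real r - real n)^2 - 3 * (real n)^2 - 2" by (rule n1)
  finally show ?thesis .
qed

end


context red begin

lemma CWpos: "finite F \<Longrightarrow> real (CW F) > 0 \<Longrightarrow> real (card F) > 0"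
  unfolding CW_def by (auto simp: card_gt_0_iff)

lemma case1:
  assumes p: "part A B" and ns: "\<not> ((Xn \<subseteq> A \<and> Yn \<subseteq> B) \<or> (Xn \<subseteq> B \<and> Yn \<subseteq> A))" and nm: "n \<le> m"
  shows "PhiSum A B < Hval (real al)"
proof -
  note pf = part_facts[OF p]
  have fA: "finite A" "finite B" using part_fin[OF p] by auto
  define C1 where "C1 = real (CW (upairs A A))"
  define C2 where "C2 = real (CW (upairs A B))"
  define C3 where "C3 = real (CW (upairs B B))"
  define N1 where "N1 = real (card (upairs A A))"
  define N2 where "N2 = real (card (upairs A B))"
  define N3 where "N3 = real (card (upairs B B))"
  have r0: "r > 0" unfolding red_r_def by simp
  have alr: "al \<ge> r^2" unfolding red_alpha_def by simp
  have alp: "real al > 0" using r0 alr by (metis gr0I le_0_eq of_nat_0_less_iff power_not_zero not_gr_zero)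
  have b1: "C1^2 / N1 \<le> (real al)^2 * (real (card (upairs A A \<inter> XYp))^2 / real (card (upairs A A - upairs (A \<inter> W) (A \<inter> W)))) + (real n * real al + 2 * real m)^2"
    unfolding C1_def N1_def by (rule blockdec) (use pf fA in auto)
  have b2: "C2^2 / N2 \<le> (real al)^2 * (real (card (upairs A B \<inter> XYp))^2 / real (card (upairs A B - upairs (A \<inter> W) (B \<inter> W)))) + (real n * real al + 2 * real m)^2"
    unfolding C2_def N2_def by (rule blockdec) (use pf fA in auto)
  have b3: "C3^2 / N3 \<le> (real al)^2 * (real (card (upairs B B \<inter> XYp))^2 / real (card (upairs B B - upairs (B \<inter> W) (B \<inter> W)))) + (real n * real al + 2 * real m)^2"
    unfolding C3_def N3_def by (rule blockdec) (use pf fA in auto)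
  have cq: "(real al)^2 * (real (card (upairs A A \<inter> XYp))^2 / real (card (upairs A A - upairs (A \<inter> W) (A \<inter> W)))
       + real (card (upairs A B \<inter> XYp))^2 / real (card (upairs A B - upairs (A \<inter> W) (B \<inter> W)))
       + real (card (upairs B B \<inter> XYp))^2 / real (card (upairs B B - upairs (B \<inter> W) (B \<inter> W))))
       \<le> (real al)^2 * ((real r - real n)^2 - 3 * (real n)^2 - 2)"
    using case1_q[OF p ns] by (intro mult_left_mono) auto
  define Qc where "Qc = C1^2 / N1 + C2^2 / N2 + C3^2 / N3"
  have Qb: "Qc \<le> (real al)^2 * ((real r - real n)^2 - 3 * (real n)^2 - 2) + 3 * (real n * real al + 2 * real m)^2"
    using b1 b2 b3 cq unfolding Qc_def by (simp add: distrib_left)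
  have pq: "Phi C N \<le> C * ln (real al) + C^2 / (real al * N) - 2 * C"
    if "C = real (CW F)" "N = real (card F)" "finite F" for C N F
    by (rule Phi_quad) (use that alp CWpos in auto)
  have p1: "Phi C1 N1 \<le> C1 * ln (real al) + C1^2 / (real al * N1) - 2 * C1"
    by (rule pq[OF C1_def N1_def]) (use fA in \<open>simp add: finite_upairs\<close>)
  have p2: "Phi C2 N2 \<le> C2 * ln (real al) + C2^2 / (real al * N2) - 2 * C2"
    by (rule pq[OF C2_def N2_def]) (use fA in \<open>simp add: finite_upairs\<close>)
  have p3: "Phi C3 N3 \<le> C3 * ln (real al) + C3^2 / (real al * N3) - 2 * C3"
    by (rule pq[OF C3_def N3_def]) (use fA in \<open>simp add: finite_upairs\<close>)
  have dq: "C1^2 / (real al * N1) + C2^2 / (real al * N2) + C3^2 / (real al * N3) = Qc / real al"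
    unfolding Qc_def by (simp add: add_divide_distrib divide_divide_eq_left mult.commute)
  have tot: "C1 + C2 + C3 = ((real r)^2 + (real n)^2) * real al + real Ltot"
  proof -
    have "CW (upairs A A) + CW (upairs A B) + CW (upairs B B) = Ltot + n*al*n + al*(r*r)" by (rule block_sum[OF p])
    hence "real (CW (upairs A A) + CW (upairs A B) + CW (upairs B B)) = real (Ltot + n*al*n + al*(r*r))" by simp
    thus ?thesis unfolding C1_def C2_def C3_def by (simp add: power2_eq_square algebra_simps)
  qed
  have PS: "PhiSum A B \<le> (((real r)^2 + (real n)^2) * real al + real Ltot) * ln (real al) + Qc / real al
          - 2 * (((real r)^2 + (real n)^2) * real al + real Ltot)"
  proof -
    have "PhiSum A B = Phi C1 N1 + Phi C2 N2 + Phi C3 N3"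
      unfolding PhiSum_def C1_def C2_def C3_def N1_def N2_def N3_def ..
    also have "\<dots> \<le> (C1 + C2 + C3) * ln (real al) + (C1^2 / (real al * N1) + C2^2 / (real al * N2) + C3^2 / (real al * N3)) - 2 * (C1 + C2 + C3)"
      using p1 p2 p3 by (simp add: algebra_simps)
    finally show ?thesis unfolding dq tot .
  qed
  have "PhiSum A B < ((real r)^2 + (real n)^2) * real al * ln (real al) - real al * (real r + real n)^2 - real Ltot * ln (real Nw) - 2"
  proof (rule case1_final[OF num_al1 num_al2 num_r _ _ _ _ Nw_bounds Qb PS refl])
    show "real n \<ge> 0" "real m \<ge> 0" "0 \<le> real Ltot" by simp_all
    show "real Ltot \<le> 2 * real m" using Ltot_le by simp
    show "real n \<le> real m" using nm by simp
  qed
  thus ?thesis unfolding Hval_def by (simp add: power2_eq_square algebra_simps)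
qed

end


theorem lemma1:
  fixes n :: nat and E :: "nat \<Rightarrow> nat \<Rightarrow> bool" and P1 P2 :: "gnode set"
  assumes "simple_graph n E"
    and "card (sedges n E) \<ge> n"
    and "is_ML_partition (red_graph n E) (red_nodes n) P1 P2"
  shows "((NX ` {..<red_r n} \<subseteq> P1 \<and> NY ` {..<red_r n} \<subseteq> P2) \<or>
          (NX ` {..<red_r n} \<subseteq> P2 \<and> NY ` {..<red_r n} \<subseteq> P1)) \<and>
         (\<forall>i<n. (NU i \<in> P1 \<longrightarrow> NV i \<in> P2) \<and> (NV i \<in> P1 \<longrightarrow> NU i \<in> P2))"
proof -
  interpret red n E .
  have nm: "n \<le> m" using assms(2) unfolding m_def .
  have hML: "is_ML_partition Gr V P1 P2" using assms(3) .
  have p: "part P1 P2" using hML unfolding is_ML_partition_def is_partition2_def part_def by blast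
  have hML': "is_ML_partition Gr V P2 P1"
  proof -
    have sw: "LL Gr Q1 Q2 a b c = LL Gr Q2 Q1 c b a" for Q1 Q2 a b c
      unfolding LL_def ellAB_def using upairs_sym[of Q1 Q2] by (simp add: ac_simps)
    show ?thesis using hML unfolding is_ML_partition_def is_partition2_def
      by (simp add: sw Un_commute Int_commute) (metis sw)
  qed
  have alp: "real al > 0"
  proof -
    have r0: "r > 0" unfolding red_r_def by simp
    have "al \<ge> r^2" unfolding red_alpha_def by simp
    thus ?thesis using r0 by (metis gr0I le_0_eq of_nat_0_less_iff power_not_zero not_gr_zero)
  qed
  have sep: "(Xn \<subseteq> P1 \<and> Yn \<subseteq> P2) \<or> (Xn \<subseteq> P2 \<and> Yn \<subseteq> P1)"
  proof (rule ccontr)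
    assume ns: "\<not> ?thesis"
    have "PhiSum P1 P2 < Hval (real al)" by (rule case1[OF p ns nm])
    thus False using mlcontra[OF hML alp] by simp
  qed
  have nb: "\<not> (NU i \<in> P1 \<and> NV i \<in> P1)" if i: "i < n" for i
  proof
    assume b: "NU i \<in> P1 \<and> NV i \<in> P1"
    from sep show False
    proof
      assume s: "Xn \<subseteq> P1 \<and> Yn \<subseteq> P2"
      obtain rho where "rho > 0" "PhiSum P1 P2 < Hval rho"
        using case2[OF p _ _ i _ nm] s b by blast
      thus False using mlcontra[OF hML] by blast
    next
      assume s: "Xn \<subseteq> P2 \<and> Yn \<subseteq> P1"
      have p': "part P2 P1" using p unfolding part_def by auto
      obtain rho where "rho > 0" "PhiSum P2 P1 < Hval rho"
        using case2[OF p' _ _ i _ nm] s b by blast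
      thus False using mlcontra[OF hML'] by blast
    qed
  qed
  have cov: "NU i \<in> P1 \<or> NU i \<in> P2" "NV i \<in> P1 \<or> NV i \<in> P2" if "i < n" for i
    using p that unfolding part_def red_nodes_def by auto
  show ?thesis using sep nb cov by blast
qed


end
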